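(* Let $\gamma\in(0,1)$, $\phi(z)=\max\{z,\gamma z\}$, and let $f(x;W)=\sum_{j=1}^m a_j\phi(w_j^\top x)$ with $a_j\in\{\pm1/\sqrt m\}$, where both signs occur. Let $\{(x_i,y_i)\}_{i=1}^n\subseteq\mathbb{R}^d\times\{\pm1\}$ satisfy $R_{\min}^2\ge 3\gamma^{-3}R^2n\max_{i\ne j}|\langle x_i,x_j\rangle|$, where $R_{\max}=\max_i\|x_i\|$, $R_{\min}=\min_i\|x_i\|$, $R=R_{\max}/R_{\min}$. Let $\ell$ be either the exponential loss $\ell(q)=e^{-q}$ or the logistic loss $\ell(q)=\log(1+e^{-q})$, $\hat L(W)=\frac1n\sum_i\ell(y_if(x_i;W))$, and let $W(t)$ be a gradient flow trajectory from an arbitrary initialization $W(0)$. Then there exists a finite time $t_0$ such that $\hat L(W(t))<\log(2)/n$ for all $t\ge t_0$.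
   Context: Gradient flow: $W(t)$ is absolutely continuous with $\frac{dW(t)}{dt}\in-\partial^\circ\hat L(W(t))$ for almost every $t$, where $\partial^\circ$ is the Clarke subdifferential $\partial^\circ f(x)=\mathrm{conv}\{\lim_k\nabla f(x_k): x_k\to x,\ f\text{ differentiable at }x_k\}$. *)

theory Defs
  imports "HOL-Analysis.Analysis"
begin

definition clarke_subdiff :: "('a::euclidean_space \<Rightarrow> real) \<Rightarrow> 'a \<Rightarrow> 'a set" where
  "clarke_subdiff f x = convex hull
     {v. \<exists>xs gs. xs \<longlonglongrightarrow> x \<and>
                 (\<forall>k. (f has_derivative (\<lambda>h. gs k \<bullet> h)) (at (xs k))) \<and>
                 gs \<longlonglongrightarrow> v}"

definition abs_cont_on :: "real \<Rightarrow> real \<Rightarrow> (real \<Rightarrow> 'a::real_normed_vector) \<Rightarrow> bool" where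
  "abs_cont_on s t f \<longleftrightarrow>
     (\<forall>e>0. \<exists>d>0. \<forall>(N::nat) (a::nat \<Rightarrow> real) b.
        (\<forall>k<N. a k \<le> b k \<and> s \<le> a k \<and> b k \<le> t) \<and>
        (\<forall>i<N. \<forall>j<N. i \<noteq> j \<longrightarrow> {a i<..<b i} \<inter> {a j<..<b j} = {}) \<and>
        (\<Sum>k<N. b k - a k) < d
        \<longrightarrow> (\<Sum>k<N. norm (f (b k) - f (a k))) < e)"

definition gradient_flow :: "('a::euclidean_space \<Rightarrow> real) \<Rightarrow> (real \<Rightarrow> 'a) \<Rightarrow> bool" where
  "gradient_flow L W \<longleftrightarrow>
     (\<forall>T\<ge>0. abs_cont_on 0 T W) \<and>
     (AE t in lborel. t \<ge> 0 \<longrightarrow>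
        (\<exists>v. (W has_vector_derivative v) (at t) \<and> - v \<in> clarke_subdiff L (W t)))"

definition leaky :: "real \<Rightarrow> real \<Rightarrow> real" where
  "leaky \<gamma> z = max z (\<gamma> * z)"

definition net :: "real \<Rightarrow> ('m::finite \<Rightarrow> real) \<Rightarrow> real^'d^'m \<Rightarrow> real^'d \<Rightarrow> real" where
  "net \<gamma> a W x = (\<Sum>j\<in>UNIV. a j * leaky \<gamma> ((W $ j) \<bullet> x))"

definition emp_loss :: "(real \<Rightarrow> real) \<Rightarrow> real \<Rightarrow> ('m::finite \<Rightarrow> real)
     \<Rightarrow> ('n::finite \<Rightarrow> real^'d) \<Rightarrow> ('n \<Rightarrow> real) \<Rightarrow> real^'d^'m \<Rightarrow> real" where
  "emp_loss lossf \<gamma> a x y W = (\<Sum>i\<in>UNIV. lossf (y i * net \<gamma> a W (x i))) / real CARD('n)"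

end

theory Submission
  imports Defs
begin

lemma abs_cont_onD:
  assumes "abs_cont_on s t f" "e > 0"
  obtains d where "d > 0" "\<And>(N::nat) a b. \<forall>k<N. a k \<le> b k \<and> s \<le> a k \<and> b k \<le> t \<Longrightarrow>
        \<forall>i<N. \<forall>j<N. i \<noteq> j \<longrightarrow> {a i<..<b i} \<inter> {a j<..<b j} = {} \<Longrightarrow>
        (\<Sum>k<N. b k - a k) < d \<Longrightarrow> (\<Sum>k<N. norm (f (b k) - f (a k))) < e"
proof -
  have "\<exists>d>0. \<forall>(N::nat) a b. (\<forall>k<N. a k \<le> b k \<and> s \<le> a k \<and> b k \<le> t) \<and>
        (\<forall>i<N. \<forall>j<N. i \<noteq> j \<longrightarrow> {a i<..<b i} \<inter> {a j<..<b j} = {}) \<and>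
        (\<Sum>k<N. b k - a k) < d \<longrightarrow> (\<Sum>k<N. norm (f (b k) - f (a k))) < e"
  proof -
    have H0: "\<forall>e>0. \<exists>d>0. \<forall>(N::nat) a b. (\<forall>k<N. a k \<le> b k \<and> s \<le> a k \<and> b k \<le> t) \<and>
        (\<forall>i<N. \<forall>j<N. i \<noteq> j \<longrightarrow> {a i<..<b i} \<inter> {a j<..<b j} = {}) \<and>
        (\<Sum>k<N. b k - a k) < d \<longrightarrow> (\<Sum>k<N. norm (f (b k) - f (a k))) < e"
      using assms(1) unfolding abs_cont_on_def .
    show ?thesis using mp[OF spec[OF H0, where x=e] assms(2)] .
  qed
  then obtain d where "d > 0" and H: "\<forall>(N::nat) a b. (\<forall>k<N. a k \<le> b k \<and> s \<le> a k \<and> b k \<le> t) \<and>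
        (\<forall>i<N. \<forall>j<N. i \<noteq> j \<longrightarrow> {a i<..<b i} \<inter> {a j<..<b j} = {}) \<and>
        (\<Sum>k<N. b k - a k) < d \<longrightarrow> (\<Sum>k<N. norm (f (b k) - f (a k))) < e"
    by (elim exE conjE)
  show ?thesis
  proof (rule that[OF \<open>d > 0\<close>])
    fix N :: nat and a b :: "nat \<Rightarrow> real" assume prems: "\<forall>k<N. a k \<le> b k \<and> s \<le> a k \<and> b k \<le> t"
      "\<forall>i<N. \<forall>j<N. i \<noteq> j \<longrightarrow> {a i<..<b i} \<inter> {a j<..<b j} = {}" "(\<Sum>k<N. b k - a k) < d"
    show "(\<Sum>k<N. norm (f (b k) - f (a k))) < e" by (rule H[rule_format]) (use prems in blast)
  qed
qed

definition sld :: "(real \<Rightarrow> real) \<Rightarrow> real \<Rightarrow> real \<Rightarrow> bool" where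
  "sld g t D \<longleftrightarrow> (\<forall>e>0. \<exists>r>0. \<forall>u v. u \<le> t \<longrightarrow> t \<le> v \<longrightarrow> v - u < r \<longrightarrow> (D - e) * (v - u) \<le> g v - g u)"

lemma ac_mono_eps:
  fixes G :: "real \<Rightarrow> real"
  assumes ac: "abs_cont_on a b G" and ab: "a \<le> b"
    and ae: "AE t in lborel. a \<le> t \<and> t \<le> b \<longrightarrow> sld G t 0"
    and e: "e > 0"
  shows "G a - G b \<le> e + e * (b - a)"
proof -
  obtain \<delta> where d: "\<delta> > 0" and acd: "\<And>(N::nat) a' b'. \<forall>k<N. a' k \<le> b' k \<and> a \<le> a' k \<and> b' k \<le> b \<Longrightarrow>
        \<forall>i<N. \<forall>j<N. i \<noteq> j \<longrightarrow> {a' i<..<b' i} \<inter> {a' j<..<b' j} = {} \<Longrightarrow>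
        (\<Sum>k<N. b' k - a' k) < \<delta> \<Longrightarrow> (\<Sum>k<N. norm (G (b' k) - G (a' k))) < e"
    by (rule abs_cont_onD[OF ac e]) (rule that; assumption)
  obtain N0 where N0: "{t \<in> space lborel. \<not> (a \<le> t \<and> t \<le> b \<longrightarrow> sld G t 0)} \<subseteq> N0" "N0 \<in> null_sets lborel"
    by (rule AE_E[OF ae]) (rule that, assumption, rule null_setsI, assumption+)
  have N0s: "N0 \<in> sets borel" using N0(2) by (auto simp: null_sets_def)
  obtain U where U: "open U" "N0 \<subseteq> U" "emeasure lborel (U - N0) < \<delta>"
    using outer_regular_lborel[OF N0s d] by blast
  have Usets: "U \<in> sets lborel" using U(1) by auto
  have eU: "emeasure lborel U < \<delta>"
    using U(3) emeasure_Diff_null_set[OF N0(2) Usets] by simp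
  have Ufm: "U \<in> fmeasurable lborel"
    using order.strict_trans[OF eU ennreal_less_top] Usets by (auto simp: fmeasurable_def)
  have mU: "measure lborel U < \<delta>"
  proof -
    have "ennreal (measure lborel U) < ennreal \<delta>" using eU emeasure_eq_measure2[OF Ufm] by simp
    then show ?thesis by (simp add: ennreal_less_iff)
  qed
  have good: "sld G t 0" if "a \<le> t" "t \<le> b" "t \<notin> N0" for t
    using N0(1) that by auto
  have "\<forall>t. \<exists>r>0. (t \<in> U \<longrightarrow> ball t r \<subseteq> U) \<and>
      (a \<le> t \<and> t \<le> b \<and> t \<notin> N0 \<longrightarrow> (\<forall>u v. u \<le> t \<longrightarrow> t \<le> v \<longrightarrow> v - u < r \<longrightarrow> - e * (v - u) \<le> G v - G u))"
  proof
    fix t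
    obtain r1 where r1: "r1 > 0" "t \<in> U \<longrightarrow> ball t r1 \<subseteq> U"
      using U(1) open_contains_ball by (metis zero_less_one)
    obtain r2 where r2: "r2 > 0" "a \<le> t \<and> t \<le> b \<and> t \<notin> N0 \<longrightarrow> (\<forall>u v. u \<le> t \<longrightarrow> t \<le> v \<longrightarrow> v - u < r2 \<longrightarrow> - e * (v - u) \<le> G v - G u)"
    proof (cases "a \<le> t \<and> t \<le> b \<and> t \<notin> N0")
      case True
      then have "sld G t 0" using good by auto
      then obtain r where "r > 0" "\<forall>u v. u \<le> t \<longrightarrow> t \<le> v \<longrightarrow> v - u < r \<longrightarrow> (0 - e) * (v - u) \<le> G v - G u"
        using e unfolding sld_def by blast
      then show ?thesis using that by auto
    next
      case False
      then show ?thesis using that[of 1] by auto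
    qed
    show "\<exists>r>0. (t \<in> U \<longrightarrow> ball t r \<subseteq> U) \<and>
      (a \<le> t \<and> t \<le> b \<and> t \<notin> N0 \<longrightarrow> (\<forall>u v. u \<le> t \<longrightarrow> t \<le> v \<longrightarrow> v - u < r \<longrightarrow> - e * (v - u) \<le> G v - G u))"
      using r1 r2 by (intro exI[of _ "min r1 r2"]) auto
  qed
  then obtain r where r: "\<And>t. r t > 0" "\<And>t. t \<in> U \<Longrightarrow> ball t (r t) \<subseteq> U"
    "\<And>t u v. a \<le> t \<Longrightarrow> t \<le> b \<Longrightarrow> t \<notin> N0 \<Longrightarrow> u \<le> t \<Longrightarrow> t \<le> v \<Longrightarrow> v - u < r t \<Longrightarrow> - e * (v - u) \<le> G v - G u"
    by metis
  have gg: "gauge (\<lambda>t. ball t (r t / 2))"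
    by (rule gauge_ball_dependent) (use r(1) in auto)
  obtain p where p: "p tagged_division_of {a..b}" "(\<lambda>t. ball t (r t / 2)) fine p"
    using fine_division_exists_real[OF gg] by blast
  have fin: "finite p" using p(1) by (auto dest: tagged_division_ofD)
  have memK: "\<exists>c d. K = {c..d} \<and> c \<le> d \<and> t \<in> K \<and> K \<subseteq> {a..b} \<and> K \<subseteq> ball t (r t / 2)" if "(t,K) \<in> p" for t K
  proof -
    from tagged_division_ofD(2-4)[OF p(1) that] obtain c d where "K = cbox c d" "t \<in> K" "K \<subseteq> {a..b}"
      by blast
    moreover have "K \<subseteq> ball t (r t / 2)" using p(2) that by (auto simp: fine_def)
    ultimately show ?thesis by (intro exI[of _ c] exI[of _ d]) auto
  qed
  have IS: "Inf K \<le> t \<and> t \<le> Sup K \<and> a \<le> Inf K \<and> Sup K \<le> b \<and> Sup K - Inf K < r t \<and> K = {Inf K..Sup K}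
      \<and> interior K = {Inf K<..<Sup K}" if tK: "(t,K) \<in> p" for t K
  proof -
    obtain c d where cd: "K = {c..d}" "c \<le> d" "t \<in> K" "K \<subseteq> {a..b}" "K \<subseteq> ball t (r t / 2)"
      using memK[OF tK] by blast
    have "c \<in> K" "d \<in> K" using cd(1,2) by auto
    then have "c \<in> ball t (r t/2)" "d \<in> ball t (r t/2)" using cd(5) by blast+
    then have "\<bar>t - c\<bar> < r t / 2" "\<bar>t - d\<bar> < r t / 2" by (auto simp: dist_real_def)
    then have "d - c < r t" unfolding abs_less_iff by linarith
    then show ?thesis using cd by auto
  qed
  define p1 where "p1 = {(t,K) \<in> p. t \<in> N0}"
  define p2 where "p2 = {(t,K) \<in> p. t \<notin> N0}"
  have p12: "p = p1 \<union> p2" "p1 \<inter> p2 = {}" unfolding p1_def p2_def by auto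
  have fin1: "finite p1" "finite p2" using fin p12 by auto
  have tot: "(\<Sum>(t,K)\<in>p. G (Sup K) - G (Inf K)) = G b - G a"
    by (rule additive_tagged_division_1[OF ab p(1)])
  have totl: "(\<Sum>(t,K)\<in>p. Sup K - Inf K) = b - a"
    using additive_tagged_division_1[OF ab p(1), of "\<lambda>x. x"] by simp
  have s2: "(\<Sum>(t,K)\<in>p2. G (Sup K) - G (Inf K)) \<ge> - e * (b - a)"
  proof -
    have "(\<Sum>(t,K)\<in>p2. G (Sup K) - G (Inf K)) \<ge> (\<Sum>(t,K)\<in>p2. - e * (Sup K - Inf K))"
    proof (rule sum_mono)
      fix x assume x: "x \<in> p2"
      obtain t K where tK: "x = (t,K)" "(t,K) \<in> p" "t \<notin> N0" using x unfolding p2_def by auto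
      from IS[OF tK(2)] have "a \<le> t" "t \<le> b" by auto
      with r(3)[of t "Inf K" "Sup K"] IS[OF tK(2)] tK(3)
      show "(case x of (t,K) \<Rightarrow> - e * (Sup K - Inf K)) \<le> (case x of (t,K) \<Rightarrow> G (Sup K) - G (Inf K))"
        using tK(1) by auto
    qed
    moreover have "(\<Sum>(t,K)\<in>p2. - e * (Sup K - Inf K)) = - e * (\<Sum>(t,K)\<in>p2. Sup K - Inf K)"
      by (simp add: sum_distrib_left case_prod_unfold)
    moreover have "(\<Sum>(t,K)\<in>p2. Sup K - Inf K) \<le> (\<Sum>(t,K)\<in>p. Sup K - Inf K)"
    proof (rule sum_mono2[OF fin])
      show "p2 \<subseteq> p" unfolding p2_def by auto
      fix x assume "x \<in> p - p2"
      then obtain t K where "x = (t,K)" "(t,K) \<in> p" by (cases x) auto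
      then show "0 \<le> (case x of (t,K) \<Rightarrow> Sup K - Inf K)" using IS[of t K] by auto
    qed
    moreover have "e * (\<Sum>(t,K)\<in>p2. Sup K - Inf K) \<le> e * (b - a)"
      using calculation(3) totl e by (intro mult_left_mono) auto
    ultimately show ?thesis by linarith
  qed
  have s1: "(\<Sum>(t,K)\<in>p1. \<bar>G (Sup K) - G (Inf K)\<bar>) < e"
  proof -
    obtain f where f: "bij_betw f {0..<card p1} p1" using ex_bij_betw_nat_finite[OF fin1(1)] by blast
    define a' where "a' k = Inf (snd (f k))" for k
    define b' where "b' k = Sup (snd (f k))" for k
    have fin_p1: "f k \<in> p1" if "k < card p1" for k
      using f that unfolding bij_betw_def by auto
    have fp: "f k \<in> p" if "k < card p1" for k using fin_p1[OF that] unfolding p1_def by auto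
    have ISf: "Inf (snd (f k)) \<le> fst (f k) \<and> fst (f k) \<le> Sup (snd (f k)) \<and> a \<le> Inf (snd (f k)) \<and> Sup (snd (f k)) \<le> b
        \<and> interior (snd (f k)) = {Inf (snd (f k))<..<Sup (snd (f k))}" if "k < card p1" for k
    proof -
      have "(fst (f k), snd (f k)) \<in> p" using fp[OF that] by simp
      from IS[OF this] show ?thesis by auto
    qed
    have IS': "a' k \<le> b' k \<and> a \<le> a' k \<and> b' k \<le> b" if "k < card p1" for k
      using ISf[OF that] unfolding a'_def b'_def by auto
    have disj: "{a' i<..<b' i} \<inter> {a' j<..<b' j} = {}" if "i < card p1" "j < card p1" "i \<noteq> j" for i j
    proof -
      have "f i \<noteq> f j" using f that unfolding bij_betw_def inj_on_def by auto
      moreover have "(fst (f i), snd (f i)) \<in> p" "(fst (f j), snd (f j)) \<in> p" using fp that by auto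
      ultimately have "interior (snd (f i)) \<inter> interior (snd (f j)) = {}"
        using tagged_division_ofD(5)[OF p(1), of "fst (f i)" "snd (f i)" "fst (f j)" "snd (f j)"] by auto
      then show ?thesis using ISf[OF that(1)] ISf[OF that(2)] unfolding a'_def b'_def by simp
    qed
    have sumeq: "(\<Sum>k<card p1. hh (f k)) = (\<Sum>x\<in>p1. hh x)" for hh :: "real \<times> real set \<Rightarrow> real"
      using sum.reindex_bij_betw[OF f, of hh] by (simp add: lessThan_atLeast0)
    have fmIoo: "{l<..<u} \<in> fmeasurable lborel" for l u :: real
    proof (cases "l \<le> u")
      case True then show ?thesis by (simp add: fmeasurable_def)
    next
      case False then have "{l<..<u} = {}" by auto
      then show ?thesis by simp
    qed
    have len: "(\<Sum>k<card p1. b' k - a' k) < \<delta>"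
    proof -
      have "(\<Sum>k<card p1. b' k - a' k) = (\<Sum>x\<in>p1. Sup (snd x) - Inf (snd x))"
        using sumeq[of "\<lambda>x. Sup (snd x) - Inf (snd x)"] unfolding a'_def b'_def by simp
      also have "\<dots> = (\<Sum>x\<in>p1. measure lborel {Inf (snd x)<..<Sup (snd x)})"
      proof (rule sum.cong[OF refl])
        fix x assume "x \<in> p1"
        then have "(fst x, snd x) \<in> p" unfolding p1_def by auto
        from IS[OF this] have "Inf (snd x) \<le> Sup (snd x)" by auto
        then show "Sup (snd x) - Inf (snd x) = measure lborel {Inf (snd x)<..<Sup (snd x)}" by simp
      qed
      also have "\<dots> = measure lborel (\<Union>x\<in>p1. {Inf (snd x)<..<Sup (snd x)})"
      proof (rule measure_UNION'[symmetric, OF fin1(1)])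
        show "\<And>i. i \<in> p1 \<Longrightarrow> {Inf (snd i)<..<Sup (snd i)} \<in> fmeasurable lborel"
          by (rule fmIoo)
        show "pairwise (\<lambda>i j. disjnt {Inf (snd i)<..<Sup (snd i)} {Inf (snd j)<..<Sup (snd j)}) p1"
          unfolding pairwise_def disjnt_def
        proof (intro ballI impI)
          fix x1 x2 assume x: "x1 \<in> p1" "x2 \<in> p1" "x1 \<noteq> x2"
          have m: "(fst x1, snd x1) \<in> p" "(fst x2, snd x2) \<in> p" using x unfolding p1_def by auto
          have "(fst x1, snd x1) \<noteq> (fst x2, snd x2)" using x(3) by (simp add: prod_eq_iff)
          then have "interior (snd x1) \<inter> interior (snd x2) = {}"
            using tagged_division_ofD(5)[OF p(1) m] by blast
          then show "{Inf (snd x1)<..<Sup (snd x1)} \<inter> {Inf (snd x2)<..<Sup (snd x2)} = {}"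
            using IS[OF m(1)] IS[OF m(2)] by simp
        qed
      qed
      also have "\<dots> \<le> measure lborel U"
      proof (rule measure_mono_fmeasurable[OF _ _ Ufm])
        show "(\<Union>x\<in>p1. {Inf (snd x)<..<Sup (snd x)}) \<subseteq> U"
        proof
          fix yy assume "yy \<in> (\<Union>x\<in>p1. {Inf (snd x)<..<Sup (snd x)})"
          then obtain x where x: "x \<in> p1" "Inf (snd x) < yy" "yy < Sup (snd x)" by auto
          have m: "(fst x, snd x) \<in> p" "fst x \<in> N0" using x(1) unfolding p1_def by auto
          obtain c d where cd: "snd x = {c..d}" "c \<le> d" "fst x \<in> snd x" "snd x \<subseteq> {a..b}"
              "snd x \<subseteq> ball (fst x) (r (fst x) / 2)"
            using memK[OF m(1)] by blast
          have "ball (fst x) (r (fst x)) \<subseteq> U" using r(2) U(2) m(2) by blast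
          moreover have "ball (fst x) (r (fst x) / 2) \<subseteq> ball (fst x) (r (fst x))"
            using r(1)[of "fst x"] by (intro subset_ball) simp
          ultimately have "snd x \<subseteq> U" using cd(5) by blast
          moreover have "yy \<in> snd x" using IS[OF m(1)] x(2,3) by auto
          ultimately show "yy \<in> U" by blast
        qed
        have "open (\<Union>x\<in>p1. {Inf (snd x)<..<Sup (snd x)})" by (intro open_UN) auto
        then show "(\<Union>x\<in>p1. {Inf (snd x)<..<Sup (snd x)}) \<in> sets lborel" by simp
      qed
      finally show ?thesis using mU by linarith
    qed
    have "(\<Sum>k<card p1. norm (G (b' k) - G (a' k))) < e"
      by (rule acd) (use IS' disj len in auto)
    then show ?thesis using sumeq[of "\<lambda>x. \<bar>G (Sup (snd x)) - G (Inf (snd x))\<bar>"]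
      unfolding a'_def b'_def by (simp add: case_prod_unfold)
  qed
  have "G b - G a = (\<Sum>(t,K)\<in>p1. G (Sup K) - G (Inf K)) + (\<Sum>(t,K)\<in>p2. G (Sup K) - G (Inf K))"
    unfolding tot[symmetric] by (subst p12(1)) (rule sum.union_disjoint; use fin1 p12 in auto)
  moreover have "(\<Sum>(t,K)\<in>p1. - \<bar>G (Sup K) - G (Inf K)\<bar>) \<le> (\<Sum>(t,K)\<in>p1. G (Sup K) - G (Inf K))"
    by (rule sum_mono) auto
  moreover have "(\<Sum>(t,K)\<in>p1. - \<bar>G (Sup K) - G (Inf K)\<bar>) = - (\<Sum>(t,K)\<in>p1. \<bar>G (Sup K) - G (Inf K)\<bar>)"
    by (simp add: case_prod_unfold sum_negf)
  ultimately show ?thesis using s1 s2 by linarith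
qed


lemma straddle_deriv:
  assumes "(z has_real_derivative z') (at t)" "e > 0"
  shows "\<exists>r>0. \<forall>u v. u \<le> t \<longrightarrow> t \<le> v \<longrightarrow> v - u < r \<longrightarrow> \<bar>z v - z u - z' * (v - u)\<bar> \<le> e * (v - u)"
proof -
  have "(z has_derivative (\<lambda>h. z' * h)) (at t)"
    using assms(1) by (simp add: has_field_derivative_def)
  then obtain d where d: "d > 0" "\<And>y. norm (y - t) < d \<Longrightarrow> norm (z y - z t - z' * (y - t)) \<le> e * norm (y - t)"
    using assms(2) unfolding has_derivative_at_alt by blast
  show ?thesis
  proof (intro exI[of _ d] conjI allI impI)
    fix u v assume uv: "u \<le> t" "t \<le> v" "v - u < d"
    have 1: "\<bar>z v - z t - z' * (v - t)\<bar> \<le> e * (v - t)" using d(2)[of v] uv by auto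
    have 2: "\<bar>z u - z t - z' * (u - t)\<bar> \<le> e * (t - u)" using d(2)[of u] uv by auto
    have "\<bar>z v - z u - z' * (v - u)\<bar> \<le> \<bar>z v - z t - z' * (v - t)\<bar> + \<bar>z u - z t - z' * (u - t)\<bar>"
      by (simp add: algebra_simps)
    also have "\<dots> \<le> e * (v - u)" using 1 2 by (simp add: algebra_simps)
    finally show "\<bar>z v - z u - z' * (v - u)\<bar> \<le> e * (v - u)" .
  qed (use d in auto)
qed

lemma sld_deriv:
  assumes "(z has_real_derivative z') (at t)"
  shows "sld z t z'"
  unfolding sld_def
proof (intro allI impI)
  fix e :: real assume e: "e > 0"
  obtain r where r: "r > 0" "\<forall>u v. u \<le> t \<longrightarrow> t \<le> v \<longrightarrow> v - u < r \<longrightarrow> \<bar>z v - z u - z' * (v - u)\<bar> \<le> e * (v - u)"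
    using straddle_deriv[OF assms e] by blast
  show "\<exists>r>0. \<forall>u v. u \<le> t \<longrightarrow> t \<le> v \<longrightarrow> v - u < r \<longrightarrow> (z' - e) * (v - u) \<le> z v - z u"
  proof (intro exI[of _ r] conjI allI impI)
    fix u v assume uv: "u \<le> t" "t \<le> v" "v - u < r"
    then have "\<bar>z v - z u - z' * (v - u)\<bar> \<le> e * (v - u)" using r by auto
    moreover have "(z' - e) * (v - u) = z' * (v - u) - e * (v - u)" by (simp add: algebra_simps)
    ultimately show "(z' - e) * (v - u) \<le> z v - z u" by (simp add: abs_le_iff)
  qed (use r in auto)
qed

lemma sld_mono:
  assumes "sld g t D" "D' \<le> D" shows "sld g t D'"
  unfolding sld_def
proof (intro allI impI)
  fix e :: real assume e: "e > 0"
  then obtain r where r: "r > 0" "\<forall>u v. u \<le> t \<longrightarrow> t \<le> v \<longrightarrow> v - u < r \<longrightarrow> (D - e) * (v - u) \<le> g v - g u"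
    using assms(1) unfolding sld_def by blast
  show "\<exists>r>0. \<forall>u v. u \<le> t \<longrightarrow> t \<le> v \<longrightarrow> v - u < r \<longrightarrow> (D' - e) * (v - u) \<le> g v - g u"
  proof (intro exI[of _ r] conjI allI impI)
    fix u v assume uv: "u \<le> t" "t \<le> v" "v - u < r"
    have "(D' - e) * (v - u) \<le> (D - e) * (v - u)" using assms(2) uv by (intro mult_right_mono) auto
    then show "(D' - e) * (v - u) \<le> g v - g u" using r uv by force
  qed (use r in auto)
qed

lemma sld_add:
  assumes "sld f t D1" "sld g t D2"
  shows "sld (\<lambda>x. f x + g x) t (D1 + D2)"
  unfolding sld_def
proof (intro allI impI)
  fix e :: real assume e: "e > 0"
  obtain r1 where r1: "r1 > 0" "\<forall>u v. u \<le> t \<longrightarrow> t \<le> v \<longrightarrow> v - u < r1 \<longrightarrow> (D1 - e/2) * (v - u) \<le> f v - f u"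
    using assms(1) e unfolding sld_def by (meson half_gt_zero)
  obtain r2 where r2: "r2 > 0" "\<forall>u v. u \<le> t \<longrightarrow> t \<le> v \<longrightarrow> v - u < r2 \<longrightarrow> (D2 - e/2) * (v - u) \<le> g v - g u"
    using assms(2) e unfolding sld_def by (meson half_gt_zero)
  show "\<exists>r>0. \<forall>u v. u \<le> t \<longrightarrow> t \<le> v \<longrightarrow> v - u < r \<longrightarrow> (D1 + D2 - e) * (v - u) \<le> f v + g v - (f u + g u)"
  proof (intro exI[of _ "min r1 r2"] conjI allI impI)
    fix u v assume uv: "u \<le> t" "t \<le> v" "v - u < min r1 r2"
    then have "(D1 - e/2) * (v - u) \<le> f v - f u" "(D2 - e/2) * (v - u) \<le> g v - g u" using r1 r2 by auto
    moreover have "(D1 + D2 - e) * (v - u) = (D1 - e/2) * (v - u) + (D2 - e/2) * (v - u)" by (simp add: algebra_simps)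
    ultimately show "(D1 + D2 - e) * (v - u) \<le> f v + g v - (f u + g u)" by linarith
  qed (use r1 r2 in auto)
qed

lemma sld_const: "sld (\<lambda>x. c) t 0"
  unfolding sld_def by (auto intro!: exI[of _ 1])

lemma sld_sum:
  assumes "finite I" "\<And>i. i \<in> I \<Longrightarrow> sld (f i) t (D i)"
  shows "sld (\<lambda>x. \<Sum>i\<in>I. f i x) t (\<Sum>i\<in>I. D i)"
  using assms
proof (induction I rule: finite_induct)
  case empty
  then show ?case using sld_const[of 0 t] by simp
next
  case (insert i I)
  then show ?case using sld_add[of "f i" t "D i" "\<lambda>x. \<Sum>i\<in>I. f i x" "\<Sum>i\<in>I. D i"] by auto
qed

lemma leaky_bounds:
  assumes "0 < \<gamma>" "\<gamma> \<le> 1" "p \<le> q"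
  shows "\<gamma> * (q - p) \<le> leaky \<gamma> q - leaky \<gamma> p \<and> leaky \<gamma> q - leaky \<gamma> p \<le> q - p"
proof -
  have pos: "leaky \<gamma> z = z" if "z \<ge> 0" for z
  proof -
    have "\<gamma> * z \<le> z" by (rule mult_left_le_one_le) (use assms that in auto)
    then show ?thesis unfolding leaky_def by simp
  qed
  have neg: "leaky \<gamma> z = \<gamma> * z" if "z < 0" for z
  proof -
    have "1 * z \<le> \<gamma> * z" by (rule mult_right_mono_neg) (use assms that in auto)
    then show ?thesis unfolding leaky_def by simp
  qed
  have gq: "\<gamma> * q \<le> q" if "q \<ge> 0" by (rule mult_left_le_one_le) (use assms that in auto)
  have gp: "p \<le> \<gamma> * p" if "p < 0"
  proof -
    have "1 * p \<le> \<gamma> * p" by (rule mult_right_mono_neg) (use assms that in auto)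
    then show ?thesis by simp
  qed
  have gd: "\<gamma> * (q - p) \<le> q - p" by (rule mult_left_le_one_le) (use assms in auto)
  show ?thesis
  proof (cases "p \<ge> 0")
    case True
    then show ?thesis using pos[of p] pos[of q] assms gd by auto
  next
    case False
    show ?thesis
    proof (cases "q \<ge> 0")
      case True
      then show ?thesis using pos[of q] neg[of p] False gq gp gd by (simp add: right_diff_distrib)
    next
      case False2: False
      then show ?thesis using neg[of p] neg[of q] False gd by (simp add: right_diff_distrib)
    qed
  qed
qed

lemma leaky_mvt:
  assumes "0 < \<gamma>" "\<gamma> \<le> 1"
  shows "\<exists>c. \<gamma> \<le> c \<and> c \<le> 1 \<and> leaky \<gamma> q - leaky \<gamma> p = c * (q - p)"
proof (cases "p = q")
  case True then show ?thesis using assms by (intro exI[of _ 1]) auto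
next
  case False
  define c where "c = (leaky \<gamma> q - leaky \<gamma> p) / (q - p)"
  have eq: "leaky \<gamma> q - leaky \<gamma> p = c * (q - p)" using False by (simp add: c_def)
  have "\<gamma> \<le> c \<and> c \<le> 1"
  proof (cases "p < q")
    case True
    have a: "\<gamma> * (q - p) \<le> c * (q - p)" "c * (q - p) \<le> 1 * (q - p)"
      using leaky_bounds[OF assms, of p q] True eq by auto
    show ?thesis using mult_right_le_imp_le[OF a(1)] mult_right_le_imp_le[OF a(2)] True by auto
  next
    case False
    then have pq: "q < p" using \<open>p \<noteq> q\<close> by auto
    have eq2: "leaky \<gamma> p - leaky \<gamma> q = c * (p - q)" using eq by (simp add: algebra_simps)
    have a: "\<gamma> * (p - q) \<le> c * (p - q)" "c * (p - q) \<le> 1 * (p - q)"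
      using leaky_bounds[OF assms, of q p] pq eq2 by auto
    show ?thesis using mult_right_le_imp_le[OF a(1)] mult_right_le_imp_le[OF a(2)] pq by auto
  qed
  then show ?thesis using eq by blast
qed

lemma leaky_lip:
  assumes "0 < \<gamma>" "\<gamma> \<le> 1"
  shows "\<bar>leaky \<gamma> q - leaky \<gamma> p\<bar> \<le> \<bar>q - p\<bar>"
proof -
  obtain c where c: "\<gamma> \<le> c" "c \<le> 1" "leaky \<gamma> q - leaky \<gamma> p = c * (q - p)"
    using leaky_mvt[OF assms] by blast
  have "\<bar>c * (q - p)\<bar> = c * \<bar>q - p\<bar>" using c assms by (simp add: abs_mult)
  also have "\<dots> \<le> \<bar>q - p\<bar>" by (rule mult_left_le_one_le) (use c assms in auto)
  finally show ?thesis using c by simp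
qed

lemma sld_leaky:
  assumes der: "(z has_real_derivative z') (at t)" and g: "0 < \<gamma>" "\<gamma> \<le> 1"
  shows "sld (\<lambda>x. s * leaky \<gamma> (z x)) t (min (s * z') (s * \<gamma> * z'))"
  unfolding sld_def
proof (intro allI impI)
  fix e :: real assume e: "e > 0"
  define e' where "e' = e / (\<bar>s\<bar> + 1)"
  have e': "e' > 0" using e by (simp add: e'_def)
  have se: "\<bar>s\<bar> * e' \<le> e"
  proof -
    have "\<bar>s\<bar> * e' = e * (\<bar>s\<bar> / (\<bar>s\<bar> + 1))" by (simp add: e'_def)
    also have "\<dots> \<le> e * 1" using e by (intro mult_left_mono) auto
    finally show ?thesis by simp
  qed
  obtain r where r: "r > 0" "\<forall>u v. u \<le> t \<longrightarrow> t \<le> v \<longrightarrow> v - u < r \<longrightarrow> \<bar>z v - z u - z' * (v - u)\<bar> \<le> e' * (v - u)"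
    using straddle_deriv[OF der e'] by blast
  show "\<exists>r>0. \<forall>u v. u \<le> t \<longrightarrow> t \<le> v \<longrightarrow> v - u < r \<longrightarrow>
      (min (s * z') (s * \<gamma> * z') - e) * (v - u) \<le> s * leaky \<gamma> (z v) - s * leaky \<gamma> (z u)"
  proof (intro exI[of _ r] conjI allI impI)
    fix u v assume uv: "u \<le> t" "t \<le> v" "v - u < r"
    define E where "E = z v - z u - z' * (v - u)"
    have E: "\<bar>E\<bar> \<le> e' * (v - u)" using r uv by (simp add: E_def)
    obtain c where c: "\<gamma> \<le> c" "c \<le> 1" "leaky \<gamma> (z v) - leaky \<gamma> (z u) = c * (z v - z u)"
      using leaky_mvt[OF g] by blast
    have "s * leaky \<gamma> (z v) - s * leaky \<gamma> (z u) = s * (leaky \<gamma> (z v) - leaky \<gamma> (z u))"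
      by (simp add: right_diff_distrib)
    also have "\<dots> = s * (c * (z' * (v - u) + E))" using c(3) by (simp add: E_def)
    also have "\<dots> = c * (s * z') * (v - u) + s * c * E" by (simp add: algebra_simps)
    finally have eq: "s * leaky \<gamma> (z v) - s * leaky \<gamma> (z u) = c * (s * z') * (v - u) + s * c * E" .
    have mn: "c * (s * z') \<ge> min (s * z') (s * \<gamma> * z')"
    proof (cases "s * z' \<ge> 0")
      case True then have "c * (s*z') \<ge> \<gamma> * (s * z')" using c by (simp add: mult_right_mono)
      then show ?thesis by (simp add: algebra_simps)
    next
      case False have "1 * (s*z') \<le> c * (s * z')" by (rule mult_right_mono_neg) (use c False in auto)
      then show ?thesis by simp
    qed
    have Y: "\<bar>s * c * E\<bar> \<le> e * (v - u)"
    proof -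
      have "\<bar>s * c * E\<bar> = \<bar>s\<bar> * c * \<bar>E\<bar>" using c g by (simp add: abs_mult)
      also have "\<dots> \<le> \<bar>s\<bar> * 1 * (e' * (v - u))"
        using c E g by (intro mult_mono) (auto intro: mult_left_mono)
      also have "\<dots> = (\<bar>s\<bar> * e') * (v - u)" by simp
      also have "\<dots> \<le> e * (v - u)" using se uv by (intro mult_right_mono) auto
      finally show ?thesis .
    qed
    have m1: "min (s * z') (s * \<gamma> * z') * (v - u) \<le> c * (s * z') * (v - u)"
      using mn uv by (intro mult_right_mono) auto
    have m2: "(min (s * z') (s * \<gamma> * z') - e) * (v - u) = min (s * z') (s * \<gamma> * z') * (v - u) - e * (v - u)"
      by (simp add: left_diff_distrib)
    show "(min (s * z') (s * \<gamma> * z') - e) * (v - u) \<le> s * leaky \<gamma> (z v) - s * leaky \<gamma> (z u)"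
      unfolding eq m2 using m1 Y by (simp add: abs_le_iff)
  qed (use r in auto)
qed

lemma sld_min:
  fixes f :: "'i \<Rightarrow> real \<Rightarrow> real"
  assumes fin: "finite I" "I \<noteq> {}"
    and cont: "\<And>i. i \<in> I \<Longrightarrow> isCont (f i) t"
    and act: "\<And>i. i \<in> I \<Longrightarrow> f i t = Min ((\<lambda>i. f i t) ` I) \<Longrightarrow> sld (f i) t c"
  shows "sld (\<lambda>x. Min ((\<lambda>i. f i x) ` I)) t c"
  unfolding sld_def
proof (intro allI impI)
  fix e :: real assume e: "e > 0"
  define m where "m = Min ((\<lambda>i. f i t) ` I)"
  define A where "A = {i \<in> I. f i t = m}"
  define B where "B = I - A"
  define g where "g = (if B = {} then 1 else Min ((\<lambda>i. f i t - m) ` B))"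
  have mle: "m \<le> f i t" if "i \<in> I" for i using fin that unfolding m_def by auto
  have g: "g > 0"
  proof (cases "B = {}")
    case False
    have "finite B" using fin unfolding B_def by auto
    moreover have "\<forall>i\<in>B. f i t - m > 0" using mle unfolding B_def A_def by force
    ultimately show ?thesis using False unfolding g_def by auto
  qed (simp add: g_def)
  have gB: "g \<le> f i t - m" if "i \<in> B" for i
  proof -
    have "finite B" using fin unfolding B_def by auto
    then show ?thesis using that unfolding g_def by auto
  qed
  have "\<forall>i\<in>I. \<exists>d>0. \<forall>x. dist x t < d \<longrightarrow> dist (f i x) (f i t) < g/2"
    using cont g unfolding continuous_at_eps_delta by (meson half_gt_zero)
  then obtain dd where dd: "\<And>i. i \<in> I \<Longrightarrow> dd i > 0" "\<And>i x. i \<in> I \<Longrightarrow> dist x t < dd i \<Longrightarrow> dist (f i x) (f i t) < g/2"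
    by metis
  define r0 where "r0 = Min (dd ` I)"
  have r0: "r0 > 0" "\<And>x. dist x t < r0 \<Longrightarrow> \<forall>i\<in>I. dist (f i x) (f i t) < g/2"
    using fin dd unfolding r0_def by auto
  have "\<forall>i\<in>A. \<exists>r>0. \<forall>u v. u \<le> t \<longrightarrow> t \<le> v \<longrightarrow> v - u < r \<longrightarrow> (c - e) * (v - u) \<le> f i v - f i u"
    using act e unfolding A_def m_def sld_def by blast
  then obtain rr where rr: "\<And>i. i \<in> A \<Longrightarrow> rr i > 0"
    "\<And>i u v. i \<in> A \<Longrightarrow> u \<le> t \<Longrightarrow> t \<le> v \<Longrightarrow> v - u < rr i \<Longrightarrow> (c - e) * (v - u) \<le> f i v - f i u"
    by metis
  have finA: "finite A" using fin unfolding A_def by auto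
  define r where "r = Min (insert r0 (rr ` A))"
  have r: "r > 0" using finA r0 rr unfolding r_def by auto
  have rle: "r \<le> r0" "\<And>i. i \<in> A \<Longrightarrow> r \<le> rr i" using finA unfolding r_def by auto
  show "\<exists>r>0. \<forall>u v. u \<le> t \<longrightarrow> t \<le> v \<longrightarrow> v - u < r \<longrightarrow>
        (c - e) * (v - u) \<le> Min ((\<lambda>i. f i v) ` I) - Min ((\<lambda>i. f i u) ` I)"
  proof (intro exI[of _ r] conjI allI impI)
    fix u v assume uv: "u \<le> t" "t \<le> v" "v - u < r"
    have "Min ((\<lambda>i. f i v) ` I) \<in> (\<lambda>i. f i v) ` I" by (rule Min_in) (use fin in auto)
    then obtain k where k: "k \<in> I" "f k v = Min ((\<lambda>i. f i v) ` I)" by auto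
    have dv: "dist v t < r0" using uv rle by (auto simp: dist_real_def)
    have kA: "k \<in> A"
    proof (rule ccontr)
      assume "k \<notin> A"
      then have kB: "k \<in> B" using k unfolding B_def by auto
      have "m \<in> (\<lambda>i. f i t) ` I" unfolding m_def by (rule Min_in) (use fin in auto)
      then obtain j where j: "j \<in> I" "f j t = m" by auto
      have h1: "\<bar>f k v - f k t\<bar> < g/2" and h2: "\<bar>f j v - f j t\<bar> < g/2"
        using r0(2)[OF dv] k(1) j(1) by (auto simp: dist_real_def)
      have "f k v > f k t - g/2" using h1 unfolding abs_less_iff by linarith
      moreover have "f j v < f j t + g/2" using h2 unfolding abs_less_iff by linarith
      moreover have "f k v \<le> f j v" using k j fin by auto
      ultimately show False using gB[OF kB] j by linarith
    qed
    have "Min ((\<lambda>i. f i u) ` I) \<le> f k u" using k fin by auto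
    moreover have "(c - e) * (v - u) \<le> f k v - f k u" using rr(2)[OF kA uv(1,2)] uv rle(2)[OF kA] by auto
    ultimately show "(c - e) * (v - u) \<le> Min ((\<lambda>i. f i v) ` I) - Min ((\<lambda>i. f i u) ` I)"
      using k by linarith
  qed (use r in auto)
qed

lemma ac_lip:
  fixes W :: "real \<Rightarrow> 'a::real_normed_vector" and F :: "'a \<Rightarrow> real"
  assumes ac: "abs_cont_on s t W" and K: "K \<ge> 0" and lip: "\<And>p q. \<bar>F p - F q\<bar> \<le> K * norm (p - q)"
  shows "abs_cont_on s t (\<lambda>\<tau>. F (W \<tau>) + c * \<tau>)"
  unfolding abs_cont_on_def
proof (intro allI impI)
  fix e :: real assume e: "e > 0"
  have e1: "e / (2 * (K + 1)) > 0" using e K by auto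
  obtain d where d: "d > 0" and acd: "\<And>(N::nat) a b. \<forall>k<N. a k \<le> b k \<and> s \<le> a k \<and> b k \<le> t \<Longrightarrow>
        \<forall>i<N. \<forall>j<N. i \<noteq> j \<longrightarrow> {a i<..<b i} \<inter> {a j<..<b j} = {} \<Longrightarrow>
        (\<Sum>k<N. b k - a k) < d \<Longrightarrow> (\<Sum>k<N. norm (W (b k) - W (a k))) < e / (2 * (K + 1))"
    by (rule abs_cont_onD[OF ac e1]) (rule that; assumption)
  define d' where "d' = min d (e / (2 * (\<bar>c\<bar> + 1)))"
  have d': "d' > 0" using d e by (simp add: d'_def)
  show "\<exists>d>0. \<forall>(N::nat) a b. (\<forall>k<N. a k \<le> b k \<and> s \<le> a k \<and> b k \<le> t) \<and>
        (\<forall>i<N. \<forall>j<N. i \<noteq> j \<longrightarrow> {a i<..<b i} \<inter> {a j<..<b j} = {}) \<and>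
        (\<Sum>k<N. b k - a k) < d \<longrightarrow>
        (\<Sum>k<N. norm (F (W (b k)) + c * b k - (F (W (a k)) + c * a k))) < e"
  proof (intro exI[of _ d'] conjI allI impI)
    fix N :: nat and a b :: "nat \<Rightarrow> real" assume H: "(\<forall>k<N. a k \<le> b k \<and> s \<le> a k \<and> b k \<le> t) \<and>
        (\<forall>i<N. \<forall>j<N. i \<noteq> j \<longrightarrow> {a i<..<b i} \<inter> {a j<..<b j} = {}) \<and> (\<Sum>k<N. b k - a k) < d'"
    have W1: "(\<Sum>k<N. norm (W (b k) - W (a k))) < e / (2 * (K + 1))"
      by (rule acd) (use H d'_def in auto)
    have L1: "(\<Sum>k<N. b k - a k) < e / (2 * (\<bar>c\<bar> + 1))" using H d'_def by auto
    have "(\<Sum>k<N. norm (F (W (b k)) + c * b k - (F (W (a k)) + c * a k)))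
        \<le> (\<Sum>k<N. K * norm (W (b k) - W (a k)) + \<bar>c\<bar> * (b k - a k))"
    proof (rule sum_mono)
      fix k assume "k \<in> {..<N}"
      then have "a k \<le> b k" using H by auto
      have "F (W (b k)) + c * b k - (F (W (a k)) + c * a k) = (F (W (b k)) - F (W (a k))) + c * (b k - a k)"
        by (simp add: algebra_simps)
      then have "norm (F (W (b k)) + c * b k - (F (W (a k)) + c * a k)) \<le> \<bar>F (W (b k)) - F (W (a k))\<bar> + \<bar>c * (b k - a k)\<bar>"
        by (simp only: real_norm_def abs_triangle_ineq)
      also have "\<dots> \<le> K * norm (W (b k) - W (a k)) + \<bar>c\<bar> * (b k - a k)"
        using lip \<open>a k \<le> b k\<close> by (simp add: abs_mult add_mono)
      finally show "norm (F (W (b k)) + c * b k - (F (W (a k)) + c * a k)) \<le> K * norm (W (b k) - W (a k)) + \<bar>c\<bar> * (b k - a k)" .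
    qed
    also have "\<dots> = K * (\<Sum>k<N. norm (W (b k) - W (a k))) + \<bar>c\<bar> * (\<Sum>k<N. b k - a k)"
      by (simp add: sum.distrib sum_distrib_left)
    also have "\<dots> \<le> K * (e / (2 * (K + 1))) + \<bar>c\<bar> * (e / (2 * (\<bar>c\<bar> + 1)))"
      using W1 L1 K by (intro add_mono mult_left_mono) auto
    also have "\<dots> < e"
    proof -
      have "K * (e / (2 * (K + 1))) = (e/2) * (K / (K + 1))" by simp
      also have "\<dots> < (e/2) * 1" using K e by (intro mult_strict_left_mono) auto
      finally have 1: "K * (e / (2 * (K + 1))) < e / 2" by simp
      have "\<bar>c\<bar> * (e / (2 * (\<bar>c\<bar> + 1))) = (e/2) * (\<bar>c\<bar> / (\<bar>c\<bar> + 1))" by simp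
      also have "\<dots> < (e/2) * 1" using e by (intro mult_strict_left_mono) auto
      finally have 2: "\<bar>c\<bar> * (e / (2 * (\<bar>c\<bar> + 1))) < e / 2" by simp
      show ?thesis using 1 2 by linarith
    qed
    finally show "(\<Sum>k<N. norm (F (W (b k)) + c * b k - (F (W (a k)) + c * a k))) < e" .
  qed (use d' in auto)
qed

lemma ac_sub: "abs_cont_on a b W \<Longrightarrow> a \<le> a' \<Longrightarrow> b' \<le> b \<Longrightarrow> abs_cont_on a' b' W"
  unfolding abs_cont_on_def by (meson order_trans)

definition qf :: "real \<Rightarrow> ('m::finite \<Rightarrow> real) \<Rightarrow> ('n \<Rightarrow> real^'d) \<Rightarrow> ('n \<Rightarrow> real) \<Rightarrow> 'n \<Rightarrow> real^'d^'m \<Rightarrow> real" where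
  "qf \<gamma> a x y i W = y i * net \<gamma> a W (x i)"

lemma qf_tendsto:
  assumes "(f \<longlongrightarrow> W0) F"
  shows "((\<lambda>\<tau>. qf \<gamma> a x y k (f \<tau>)) \<longlongrightarrow> qf \<gamma> a x y k W0) F"
  unfolding qf_def net_def leaky_def by (intro tendsto_intros assms)

lemma loss_props:
  assumes "lossf = (\<lambda>q. exp (- q)) \<or> lossf = (\<lambda>q. ln (1 + exp (- q)))"
  obtains h where "\<And>q. (lossf has_real_derivative - h q) (at q)" "\<And>q. h q > 0"
    "\<And>p q. p \<le> q \<Longrightarrow> h q \<le> h p" "\<And>q. isCont h q" "\<And>q. lossf q \<le> exp (- q)"
  using assms
proof
  assume l: "lossf = (\<lambda>q. exp (- q))"
  show thesis
  proof (rule that[of "\<lambda>q. exp (- q)"])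
    show "(lossf has_real_derivative - exp (- q)) (at q)" for q
      unfolding l by (auto intro!: derivative_eq_intros)
  qed (auto simp: l intro!: continuous_intros)
next
  assume l: "lossf = (\<lambda>q. ln (1 + exp (- q)))"
  show thesis
  proof (rule that[of "\<lambda>q. 1 / (1 + exp q)"])
    fix q :: real
    have "((\<lambda>q. ln (1 + exp (- q))) has_real_derivative (1 / (1 + exp (- q))) * (exp (- q) * (- 1))) (at q)"
      by (rule derivative_eq_intros refl | simp add: add_pos_pos)+
    moreover have "(1 / (1 + exp (- q))) * (exp (- q) * (- 1)) = - (1 / (1 + exp q))"
    proof -
      have "exp q > 0" by simp
      then have nz: "1 + exp q \<noteq> 0" by linarith
      then show ?thesis by (simp add: exp_minus field_simps)
    qed
    ultimately show "(lossf has_real_derivative - (1 / (1 + exp q))) (at q)" unfolding l by simp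
    show "1 / (1 + exp q) > 0" by (simp add: add_pos_pos)
    show "isCont (\<lambda>q. 1 / (1 + exp q)) q"
      by (intro continuous_intros) (metis add_pos_pos exp_gt_zero less_irrefl zero_less_one)
    show "lossf q \<le> exp (- q)" unfolding l by (rule ln_add_one_self_le_self) simp
  next
    fix p q :: real assume "p \<le> q"
    then have "1 + exp p \<le> 1 + exp q" by simp
    then show "1 / (1 + exp q) \<le> 1 / (1 + exp p)"
      by (intro divide_left_mono) (auto simp: add_pos_pos)
  qed
qed

lemma tangent_ineq:
  fixes l h :: "real \<Rightarrow> real"
  assumes der: "\<And>q. (l has_real_derivative - h q) (at q)" and anti: "\<And>p q. p \<le> q \<Longrightarrow> h q \<le> h p"
  shows "l Q - l q \<le> h Q * (q - Q)"
proof (cases q Q rule: linorder_cases)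
  case less
  obtain z where z: "q < z" "z < Q" "l Q - l q = (Q - q) * (- h z)"
    using MVT2[OF less, of l "\<lambda>x. - h x"] der by blast
  have "h Q \<le> h z" using anti z by auto
  then have "(Q - q) * h Q \<le> (Q - q) * h z" using less by (intro mult_left_mono) auto
  then show ?thesis using z(3) by (simp add: algebra_simps)
next
  case equal then show ?thesis by simp
next
  case greater
  obtain z where z: "Q < z" "z < q" "l q - l Q = (q - Q) * (- h z)"
    using MVT2[OF greater, of l "\<lambda>x. - h x"] der by blast
  have "h z \<le> h Q" using anti z by auto
  then have "(q - Q) * h z \<le> (q - Q) * h Q" using greater by (intro mult_left_mono) auto
  then show ?thesis using z(3) by (simp add: algebra_simps)
qed

lemma Min_lip:
  fixes f g :: "'i \<Rightarrow> real"
  assumes "finite I" "I \<noteq> {}" "\<And>i. i \<in> I \<Longrightarrow> \<bar>f i - g i\<bar> \<le> K"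
  shows "\<bar>Min (f ` I) - Min (g ` I)\<bar> \<le> K"
proof -
  have "Min (f ` I) \<in> f ` I" "Min (g ` I) \<in> g ` I" using assms by auto
  then obtain i j where ij: "i \<in> I" "Min (f ` I) = f i" "j \<in> I" "Min (g ` I) = g j" by auto
  have "Min (f ` I) \<le> f j" by (rule Min_le) (use assms ij in auto)
  have "Min (g ` I) \<le> g i" by (rule Min_le) (use assms ij in auto)
  moreover have "\<bar>f i - g i\<bar> \<le> K" "\<bar>f j - g j\<bar> \<le> K" using assms ij by auto
  ultimately show ?thesis using ij \<open>Min (f ` I) \<le> f j\<close> unfolding abs_le_iff by linarith
qed

lemma ac_mono:
  fixes G :: "real \<Rightarrow> real"
  assumes ac: "abs_cont_on a b G" and ab: "a \<le> b"
    and ae: "AE t in lborel. a \<le> t \<and> t \<le> b \<longrightarrow> sld G t 0"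
  shows "G a \<le> G b"
proof (rule ccontr)
  assume "\<not> G a \<le> G b"
  define w where "w = 1 + (b - a)"
  have w: "w > 0" using ab by (simp add: w_def)
  define e where "e = (G a - G b) / (2 * w)"
  have e: "e > 0" using \<open>\<not> G a \<le> G b\<close> w by (simp add: e_def)
  have "G a - G b \<le> e + e * (b - a)" by (rule ac_mono_eps[OF ac ab ae e])
  also have "e + e * (b - a) = e * w" by (simp add: w_def algebra_simps)
  also have "\<dots> = (G a - G b) / 2" using w by (simp add: e_def)
  finally show False using \<open>\<not> G a \<le> G b\<close> by (simp add: field_simps)
qed

lemma sld_add_lin: "sld f t D \<Longrightarrow> sld (\<lambda>\<tau>. f \<tau> + c * \<tau>) t (D + c)"
  by (rule sld_add) (auto intro!: sld_deriv derivative_eq_intros)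

lemma clarke_halfspace:
  fixes L :: "'a::euclidean_space \<Rightarrow> real"
  assumes pt: "\<And>W' g. (L has_derivative (\<lambda>H. g \<bullet> H)) (at W') \<Longrightarrow> g \<bullet> U \<le> - P W'"
    and cont: "\<And>xs. xs \<longlonglongrightarrow> W0 \<Longrightarrow> (\<lambda>k. P (xs k)) \<longlonglongrightarrow> P W0"
    and v: "v \<in> clarke_subdiff L W0"
  shows "v \<bullet> U \<le> - P W0"
proof -
  have "{v. \<exists>xs gs. xs \<longlonglongrightarrow> W0 \<and> (\<forall>k. (L has_derivative (\<lambda>h. gs k \<bullet> h)) (at (xs k))) \<and> gs \<longlonglongrightarrow> v}
      \<subseteq> {v. U \<bullet> v \<le> - P W0}"
  proof clarify
    fix v xs gs assume H: "xs \<longlonglongrightarrow> W0" "\<forall>k. (L has_derivative (\<lambda>h. gs k \<bullet> h)) (at (xs k))" "gs \<longlonglongrightarrow> v"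
    have "(\<lambda>k. gs k \<bullet> U) \<longlonglongrightarrow> v \<bullet> U" by (intro tendsto_intros H(3))
    moreover have "(\<lambda>k. - P (xs k)) \<longlonglongrightarrow> - P W0" by (intro tendsto_intros cont H(1))
    moreover have "\<forall>k. gs k \<bullet> U \<le> - P (xs k)" using pt H(2) by blast
    ultimately have "v \<bullet> U \<le> - P W0" by (intro LIMSEQ_le) auto
    then show "U \<bullet> v \<le> - P W0" by (simp add: inner_commute)
  qed
  then have "convex hull {v. \<exists>xs gs. xs \<longlonglongrightarrow> W0 \<and> (\<forall>k. (L has_derivative (\<lambda>h. gs k \<bullet> h)) (at (xs k))) \<and> gs \<longlonglongrightarrow> v}
      \<subseteq> {v. U \<bullet> v \<le> - P W0}"
    by (intro hull_minimal convex_halfspace_le)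
  then have "v \<in> {v. U \<bullet> v \<le> - P W0}" using v unfolding clarke_subdiff_def by blast
  then show ?thesis by (simp add: inner_commute)
qed

lemma emp_loss_qf: "emp_loss lossf \<gamma> a x y W = (\<Sum>k\<in>UNIV. lossf (qf \<gamma> a x y k W)) / real CARD('n)"
  for x :: "'n::finite \<Rightarrow> real^'d"
  by (simp add: emp_loss_def qf_def)

lemma delta_formula:
  fixes x :: "'n::finite \<Rightarrow> real^'d" and a :: "'m::finite \<Rightarrow> real" and y :: "'n \<Rightarrow> real"
    and W' :: "real^'d^'m" and c :: "'m \<Rightarrow> real"
  assumes g01: "0 < \<gamma>" "\<gamma> \<le> 1"
  shows "\<exists>cc. (\<forall>j. \<gamma> \<le> cc j \<and> cc j \<le> 1) \<and>
    qf \<gamma> a x y k (W' + s *\<^sub>R (\<chi> j. (y i * a j * c j) *\<^sub>R x i)) - qf \<gamma> a x y k W'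
      = s * (y k * y i * (x i \<bullet> x k)) * (\<Sum>j\<in>UNIV. (a j)\<^sup>2 * (c j * cc j))"
proof -
  define U where "U = (\<chi> j. (y i * a j * c j) *\<^sub>R x i)"
  have zs: "(W' + s *\<^sub>R U) $ j \<bullet> x k = W' $ j \<bullet> x k + s * (y i * a j * c j) * (x i \<bullet> x k)" for j
    by (simp add: U_def inner_add_left algebra_simps)
  have "\<forall>j. \<exists>c'. \<gamma> \<le> c' \<and> c' \<le> 1 \<and> leaky \<gamma> ((W' + s *\<^sub>R U) $ j \<bullet> x k) - leaky \<gamma> (W' $ j \<bullet> x k)
      = c' * (s * (y i * a j * c j) * (x i \<bullet> x k))"
  proof
    fix j
    show "\<exists>c'. \<gamma> \<le> c' \<and> c' \<le> 1 \<and> leaky \<gamma> ((W' + s *\<^sub>R U) $ j \<bullet> x k) - leaky \<gamma> (W' $ j \<bullet> x k)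
      = c' * (s * (y i * a j * c j) * (x i \<bullet> x k))"
      using leaky_mvt[OF g01, of "(W' + s *\<^sub>R U) $ j \<bullet> x k" "W' $ j \<bullet> x k"] unfolding zs by simp
  qed
  from choice[OF this] obtain cc where cc: "\<And>j. \<gamma> \<le> cc j \<and> cc j \<le> 1 \<and>
      leaky \<gamma> ((W' + s *\<^sub>R U) $ j \<bullet> x k) - leaky \<gamma> (W' $ j \<bullet> x k) = cc j * (s * (y i * a j * c j) * (x i \<bullet> x k))"
    by blast
  have "qf \<gamma> a x y k (W' + s *\<^sub>R U) - qf \<gamma> a x y k W'
      = y k * (\<Sum>j\<in>UNIV. a j * (leaky \<gamma> ((W' + s *\<^sub>R U) $ j \<bullet> x k) - leaky \<gamma> (W' $ j \<bullet> x k)))"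
    by (simp add: qf_def net_def right_diff_distrib sum_subtractf)
  also have "\<dots> = y k * (\<Sum>j\<in>UNIV. a j * (cc j * (s * (y i * a j * c j) * (x i \<bullet> x k))))"
    using cc by simp
  also have "\<dots> = s * (y k * y i * (x i \<bullet> x k)) * (\<Sum>j\<in>UNIV. (a j)\<^sup>2 * (c j * cc j))"
    by (simp add: sum_distrib_left power2_eq_square mult_ac)
  finally show ?thesis using cc unfolding U_def by blast
qed

lemma pointwise:
  fixes x :: "'n::finite \<Rightarrow> real^'d" and a :: "'m::finite \<Rightarrow> real" and y :: "'n \<Rightarrow> real"
    and W' g U :: "real^'d^'m" and c :: "'m \<Rightarrow> real"
  assumes der: "\<And>q. (lossf has_real_derivative - h q) (at q)"
    and anti: "\<And>p q. p \<le> q \<Longrightarrow> h q \<le> h p" and hpos: "\<And>q. h q > 0" and hc: "\<And>q. isCont h q"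
    and g01: "0 < \<gamma>" "\<gamma> \<le> 1"
    and asq: "(\<Sum>j\<in>UNIV. (a j)\<^sup>2) = 1"
    and yv: "\<And>k. y k = 1 \<or> y k = -1"
    and eps: "\<And>k. k \<noteq> i \<Longrightarrow> \<bar>x i \<bullet> x k\<bar> \<le> \<epsilon>"
    and cb: "\<And>j. \<gamma> \<le> c j \<and> c j \<le> 1"
    and U: "U = (\<chi> j. (y i * a j * c j) *\<^sub>R x i)"
    and gd: "(emp_loss lossf \<gamma> a x y has_derivative (\<lambda>H. g \<bullet> H)) (at W')"
  shows "g \<bullet> U \<le> - ((\<gamma>\<^sup>2 * (norm (x i))\<^sup>2 * h (qf \<gamma> a x y i W')
                    - \<epsilon> * (\<Sum>k\<in>UNIV-{i}. h (qf \<gamma> a x y k W'))) / real CARD('n))"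
proof -
  let ?q = "\<lambda>k W. qf \<gamma> a x y k W"
  let ?L = "emp_loss lossf \<gamma> a x y"
  define Psi where "Psi W = (\<gamma>\<^sup>2 * (norm (x i))\<^sup>2 * h (?q i W) - \<epsilon> * (\<Sum>k\<in>UNIV-{i}. h (?q k W))) / real CARD('n)" for W
  have n: "real CARD('n) > 0" by simp
  have S_bounds: "\<gamma>\<^sup>2 \<le> (\<Sum>j\<in>UNIV. (a j)\<^sup>2 * (c j * cc j)) \<and> (\<Sum>j\<in>UNIV. (a j)\<^sup>2 * (c j * cc j)) \<le> 1"
    if cc: "\<forall>j. \<gamma> \<le> cc j \<and> cc j \<le> 1" for cc
  proof -
    have lo: "(a j)\<^sup>2 * \<gamma>\<^sup>2 \<le> (a j)\<^sup>2 * (c j * cc j)" for j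
    proof -
      have "\<gamma> \<le> cc j" using cc by blast
      then have "\<gamma> * \<gamma> \<le> c j * cc j" using cb[of j] g01 by (intro mult_mono) auto
      then show ?thesis by (intro mult_left_mono) (auto simp: power2_eq_square)
    qed
    have hi: "(a j)\<^sup>2 * (c j * cc j) \<le> (a j)\<^sup>2 * 1" for j
    proof -
      have "cc j \<le> 1" "\<gamma> \<le> cc j" using cc by blast+
      then have "c j * cc j \<le> 1 * 1" using cb[of j] g01 by (intro mult_mono) auto
      then show ?thesis by (intro mult_left_mono) auto
    qed
    have "(\<Sum>j\<in>UNIV. (a j)\<^sup>2 * \<gamma>\<^sup>2) \<le> (\<Sum>j\<in>UNIV. (a j)\<^sup>2 * (c j * cc j))" by (intro sum_mono lo)
    moreover have "(\<Sum>j\<in>UNIV. (a j)\<^sup>2 * (c j * cc j)) \<le> (\<Sum>j\<in>UNIV. (a j)\<^sup>2 * 1)" by (intro sum_mono hi)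
    moreover have "(\<Sum>j\<in>UNIV. (a j)\<^sup>2 * \<gamma>\<^sup>2) = \<gamma>\<^sup>2" using asq by (simp add: sum_distrib_right[symmetric])
    ultimately show ?thesis using asq by simp
  qed
  have yy: "y k * y k = 1" for k using yv[of k] by auto
  have ay: "\<bar>y k * y i\<bar> = 1" for k using yv[of k] yv[of i] by auto
  have Di: "?q i (W' + s *\<^sub>R U) - ?q i W' \<ge> s * (\<gamma>\<^sup>2 * (norm (x i))\<^sup>2)" if s: "s \<ge> 0" for s
  proof -
    obtain cc where cc: "\<forall>j. \<gamma> \<le> cc j \<and> cc j \<le> 1"
      and eq: "?q i (W' + s *\<^sub>R U) - ?q i W' = s * (y i * y i * (x i \<bullet> x i)) * (\<Sum>j\<in>UNIV. (a j)\<^sup>2 * (c j * cc j))"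
      using delta_formula[OF g01, where k=i and i=i and s=s and c=c and W'=W'] unfolding U by blast
    have "s * (\<gamma>\<^sup>2 * (norm (x i))\<^sup>2) = (s * (norm (x i))\<^sup>2) * \<gamma>\<^sup>2" by (simp add: mult_ac)
    also have "\<dots> \<le> (s * (norm (x i))\<^sup>2) * (\<Sum>j\<in>UNIV. (a j)\<^sup>2 * (c j * cc j))"
      using S_bounds[OF cc] s by (intro mult_left_mono) auto
    also have "\<dots> = ?q i (W' + s *\<^sub>R U) - ?q i W'"
      unfolding eq yy by (simp add: power2_norm_eq_inner)
    finally show ?thesis .
  qed
  have Dk: "\<bar>?q k (W' + s *\<^sub>R U) - ?q k W'\<bar> \<le> s * \<epsilon>" if s: "s \<ge> 0" and k: "k \<noteq> i" for s k
  proof -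
    obtain cc where cc: "\<forall>j. \<gamma> \<le> cc j \<and> cc j \<le> 1"
      and eq: "?q k (W' + s *\<^sub>R U) - ?q k W' = s * (y k * y i * (x i \<bullet> x k)) * (\<Sum>j\<in>UNIV. (a j)\<^sup>2 * (c j * cc j))"
      using delta_formula[OF g01, where k=k and i=i and s=s and c=c and W'=W'] unfolding U by blast
    have S: "\<bar>\<Sum>j\<in>UNIV. (a j)\<^sup>2 * (c j * cc j)\<bar> \<le> 1"
    proof -
      have "0 \<le> \<gamma>\<^sup>2" by simp
      then show ?thesis using S_bounds[OF cc] unfolding abs_le_iff by linarith
    qed
    have "\<bar>?q k (W' + s *\<^sub>R U) - ?q k W'\<bar> = s * \<bar>x i \<bullet> x k\<bar> * \<bar>\<Sum>j\<in>UNIV. (a j)\<^sup>2 * (c j * cc j)\<bar>"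
      unfolding eq using s ay[of k] by (simp add: abs_mult)
    also have "\<dots> \<le> s * \<epsilon> * 1"
      using s eps[OF k] S by (intro mult_mono) (auto intro: mult_left_mono)
    finally show ?thesis by simp
  qed
  have bound: "(?L (W' + s *\<^sub>R U) - ?L W') / s \<le> - Psi (W' + s *\<^sub>R U)" if s: "s > 0" for s
  proof -
    let ?Q = "\<lambda>k. ?q k (W' + s *\<^sub>R U)"
    have t: "lossf (?Q k) - lossf (?q k W') \<le> - (h (?Q k) * (?Q k - ?q k W'))" for k
      using tangent_ineq[OF der anti, of "?Q k" "?q k W'"] by (simp add: algebra_simps)
    have "?L (W' + s *\<^sub>R U) - ?L W' = (\<Sum>k\<in>UNIV. lossf (?Q k) - lossf (?q k W')) / real CARD('n)"
      unfolding emp_loss_qf by (simp add: sum_subtractf diff_divide_distrib)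
    also have "\<dots> \<le> (\<Sum>k\<in>UNIV. - (h (?Q k) * (?Q k - ?q k W'))) / real CARD('n)"
      using n by (intro divide_right_mono sum_mono t) auto
    also have "(\<Sum>k\<in>UNIV. - (h (?Q k) * (?Q k - ?q k W')))
        = - (h (?Q i) * (?Q i - ?q i W')) + (\<Sum>k\<in>UNIV-{i}. - (h (?Q k) * (?Q k - ?q k W')))"
      by (simp add: sum.remove)
    also have "\<dots> \<le> - (h (?Q i) * (s * (\<gamma>\<^sup>2 * (norm (x i))\<^sup>2))) + (\<Sum>k\<in>UNIV-{i}. h (?Q k) * (s * \<epsilon>))"
    proof (rule add_mono)
      show "- (h (?Q i) * (?Q i - ?q i W')) \<le> - (h (?Q i) * (s * (\<gamma>\<^sup>2 * (norm (x i))\<^sup>2)))"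
        using Di[of s] s hpos[of "?Q i"] by (auto intro: mult_left_mono)
      show "(\<Sum>k\<in>UNIV-{i}. - (h (?Q k) * (?Q k - ?q k W'))) \<le> (\<Sum>k\<in>UNIV-{i}. h (?Q k) * (s * \<epsilon>))"
      proof (rule sum_mono)
        fix k assume "k \<in> UNIV - {i}"
        then have k: "k \<noteq> i" by auto
        have "- (h (?Q k) * (?Q k - ?q k W')) = h (?Q k) * (- (?Q k - ?q k W'))" by (simp add: algebra_simps)
        also have "\<dots> \<le> h (?Q k) * \<bar>?Q k - ?q k W'\<bar>"
          using hpos[of "?Q k"] by (intro mult_left_mono) auto
        finally have "- (h (?Q k) * (?Q k - ?q k W')) \<le> h (?Q k) * \<bar>?Q k - ?q k W'\<bar>" .
        also have "\<dots> \<le> h (?Q k) * (s * \<epsilon>)"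
          using Dk[of s k] s k hpos[of "?Q k"] by (intro mult_left_mono) auto
        finally show "- (h (?Q k) * (?Q k - ?q k W')) \<le> h (?Q k) * (s * \<epsilon>)" .
      qed
    qed
    also have "\<dots> = s * (- (\<gamma>\<^sup>2 * (norm (x i))\<^sup>2 * h (?Q i) - \<epsilon> * (\<Sum>k\<in>UNIV-{i}. h (?Q k))))"
      by (simp add: sum_distrib_left sum_distrib_right algebra_simps)
    finally have "?L (W' + s *\<^sub>R U) - ?L W' \<le> s * (- Psi (W' + s *\<^sub>R U))"
      unfolding Psi_def using n by (simp add: field_simps)
    then show ?thesis using s by (simp add: divide_le_eq mult.commute)
  qed
  have lin: "((\<lambda>s. W' + s *\<^sub>R U) has_derivative (\<lambda>s. s *\<^sub>R U)) (at 0)"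
    by (auto intro!: derivative_eq_intros)
  have gd0: "(?L has_derivative (\<lambda>H. g \<bullet> H)) (at (W' + 0 *\<^sub>R U))" using gd by simp
  have "((\<lambda>s. ?L (W' + s *\<^sub>R U)) has_derivative (\<lambda>s. g \<bullet> (s *\<^sub>R U))) (at 0)"
    using has_derivative_compose[OF lin gd0] by simp
  moreover have "(\<lambda>s. g \<bullet> (s *\<^sub>R U)) = (*) (g \<bullet> U)" by (auto simp: fun_eq_iff)
  ultimately have "((\<lambda>s. ?L (W' + s *\<^sub>R U)) has_field_derivative (g \<bullet> U)) (at 0)"
    unfolding has_field_derivative_def by simp
  then have "((\<lambda>s. (?L (W' + s *\<^sub>R U) - ?L (W' + 0 *\<^sub>R U)) / (s - 0)) \<longlongrightarrow> g \<bullet> U) (at 0)"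
    unfolding has_field_derivative_iff .
  then have lim1: "((\<lambda>s. (?L (W' + s *\<^sub>R U) - ?L W') / s) \<longlongrightarrow> g \<bullet> U) (at_right 0)"
    by (auto intro: tendsto_within_subset)
  have "((\<lambda>s. W' + s *\<^sub>R U) \<longlongrightarrow> W' + 0 *\<^sub>R U) (at_right 0)"
    by (intro tendsto_intros)
  then have wl: "((\<lambda>s. W' + s *\<^sub>R U) \<longlongrightarrow> W') (at_right 0)" by simp
  have lim2: "((\<lambda>s. - Psi (W' + s *\<^sub>R U)) \<longlongrightarrow> - Psi W') (at_right 0)"
    unfolding Psi_def
    by (intro tendsto_intros isCont_tendsto_compose[OF hc] qf_tendsto wl) simp
  have "g \<bullet> U \<le> - Psi W'"
    by (rule tendsto_le[OF trivial_limit_at_right_real lim2 lim1])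
       (auto simp: eventually_at_right_less bound intro: eventually_mono[OF eventually_at_right_less])
  then show ?thesis unfolding Psi_def .
qed

lemma inner_vec_sum: "(v::'a::real_inner^'b::finite) \<bullet> w = (\<Sum>i\<in>UNIV. v$i \<bullet> w$i)"
  unfolding inner_vec_def ..

lemma key_sld:
  fixes x :: "'n::finite \<Rightarrow> real^'d" and a :: "'m::finite \<Rightarrow> real" and y :: "'n \<Rightarrow> real"
    and W :: "real \<Rightarrow> real^'d^'m" and V :: "real^'d^'m"
  assumes der: "\<And>q. (lossf has_real_derivative - h q) (at q)"
    and anti: "\<And>p q. p \<le> q \<Longrightarrow> h q \<le> h p" and hpos: "\<And>q. h q > 0" and hc: "\<And>q. isCont h q"
    and g01: "0 < \<gamma>" "\<gamma> \<le> 1"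
    and asq: "(\<Sum>j\<in>UNIV. (a j)\<^sup>2) = 1"
    and yv: "\<And>k. y k = 1 \<or> y k = -1"
    and eps: "\<And>i k. i \<noteq> k \<Longrightarrow> \<bar>x i \<bullet> x k\<bar> \<le> \<epsilon>" and eps0: "\<epsilon> \<ge> 0"
    and rho: "\<And>i. \<rho> \<le> norm (x i)" and rho0: "\<rho> \<ge> 0"
    and Wd: "(W has_vector_derivative V) (at t)"
    and cl: "- V \<in> clarke_subdiff (emp_loss lossf \<gamma> a x y) (W t)"
  shows "sld (\<lambda>\<tau>. Min (range (\<lambda>i. qf \<gamma> a x y i (W \<tau>)))) t
     ((\<gamma>\<^sup>2 * \<rho>\<^sup>2 - (real CARD('n) - 1) * \<epsilon>) / real CARD('n) * h (Min (range (\<lambda>i. qf \<gamma> a x y i (W t)))))"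
proof -
  let ?q = "\<lambda>k W. qf \<gamma> a x y k W"
  define Psi where "Psi i W = (\<gamma>\<^sup>2 * (norm (x i))\<^sup>2 * h (?q i W) - \<epsilon> * (\<Sum>k\<in>UNIV-{i}. h (?q k W))) / real CARD('n)" for i W
  define mm where "mm = Min (range (\<lambda>i. ?q i (W t)))"
  have n: "real CARD('n) > 0" by simp
  have per_i: "sld (\<lambda>\<tau>. ?q i (W \<tau>)) t (Psi i (W t))" for i
  proof -
    define z' where "z' j = V $ j \<bullet> x i" for j
    have zd: "((\<lambda>\<tau>. W \<tau> $ j \<bullet> x i) has_real_derivative z' j) (at t)" for j
    proof -
      have bl: "bounded_linear (\<lambda>M::real^'d^'m. M $ j \<bullet> x i)"
        by (rule bounded_linear_compose[OF bounded_linear_inner_left bounded_linear_vec_nth])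
      show ?thesis using bounded_linear.has_vector_derivative[OF bl Wd]
        unfolding has_real_derivative_iff_has_vector_derivative z'_def .
    qed
    define s where "s j = y i * a j" for j
    define cj where "cj j = (if s j * z' j \<le> s j * \<gamma> * z' j then 1 else \<gamma>)" for j
    have qeq: "(\<lambda>\<tau>. ?q i (W \<tau>)) = (\<lambda>\<tau>. \<Sum>j\<in>UNIV. s j * leaky \<gamma> (W \<tau> $ j \<bullet> x i))"
      by (simp add: qf_def net_def sum_distrib_left mult.assoc fun_eq_iff s_def)
    have s1: "sld (\<lambda>\<tau>. ?q i (W \<tau>)) t (\<Sum>j\<in>UNIV. min (s j * z' j) (s j * \<gamma> * z' j))"
      unfolding qeq by (intro sld_sum sld_leaky[OF zd g01]) auto
    have mineq: "min (s j * z' j) (s j * \<gamma> * z' j) = (y i * a j * cj j) * z' j" for j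
      by (simp add: cj_def s_def min_def)
    define U where "U = (\<chi> j. (y i * a j * cj j) *\<^sub>R x i)"
    have VU: "V \<bullet> U = (\<Sum>j\<in>UNIV. min (s j * z' j) (s j * \<gamma> * z' j))"
      unfolding mineq by (simp add: U_def inner_vec_sum[of V] z'_def mult_ac)
    have cb: "\<gamma> \<le> cj j \<and> cj j \<le> 1" for j using g01 by (simp add: cj_def)
    have "(- V) \<bullet> U \<le> - Psi i (W t)"
    proof (rule clarke_halfspace[OF _ _ cl])
      fix W' g assume gd: "(emp_loss lossf \<gamma> a x y has_derivative (\<lambda>H. g \<bullet> H)) (at W')"
      show "g \<bullet> U \<le> - Psi i W'"
        unfolding Psi_def
        by (rule pointwise[OF der anti hpos hc g01 asq yv _ cb U_def gd]) (use eps in auto)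
    next
      fix xs :: "nat \<Rightarrow> real^'d^'m" assume "xs \<longlonglongrightarrow> W t"
      then show "(\<lambda>k. Psi i (xs k)) \<longlonglongrightarrow> Psi i (W t)"
        unfolding Psi_def by (intro tendsto_intros isCont_tendsto_compose[OF hc] qf_tendsto) auto
    qed
    then have "Psi i (W t) \<le> V \<bullet> U" by simp
    then show ?thesis using s1 VU by (auto intro: sld_mono)
  qed
  have contq: "isCont (\<lambda>\<tau>. ?q i (W \<tau>)) t" for i
  proof -
    have "(W \<longlongrightarrow> W t) (at t)" using has_vector_derivative_continuous[OF Wd] by (simp add: continuous_at)
    then show ?thesis unfolding isCont_def by (rule qf_tendsto)
  qed
  show ?thesis
  proof (rule sld_min)
    fix i assume "i \<in> (UNIV :: 'n set)" and act: "?q i (W t) = Min (range (\<lambda>i. ?q i (W t)))"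
    have hm: "h (?q k (W t)) \<le> h mm" for k
      by (rule anti) (simp add: mm_def)
    have hi: "h (?q i (W t)) = h mm" using act by (simp add: mm_def)
    have "(\<Sum>k\<in>UNIV-{i}. h (?q k (W t))) \<le> (\<Sum>k\<in>UNIV-{i}. h mm)" by (intro sum_mono hm)
    also have "\<dots> = (real CARD('n) - 1) * h mm"
      by (simp add: card_Diff_singleton of_nat_diff)
    finally have sk: "\<epsilon> * (\<Sum>k\<in>UNIV-{i}. h (?q k (W t))) \<le> \<epsilon> * ((real CARD('n) - 1) * h mm)"
      using eps0 by (intro mult_left_mono) auto
    have "\<rho>\<^sup>2 \<le> (norm (x i))\<^sup>2" using rho[of i] rho0 by (intro power_mono) auto
    then have "\<gamma>\<^sup>2 * \<rho>\<^sup>2 * h mm \<le> \<gamma>\<^sup>2 * (norm (x i))\<^sup>2 * h mm"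
      using hpos[of mm] by (intro mult_right_mono mult_left_mono) auto
    then have "(\<gamma>\<^sup>2 * \<rho>\<^sup>2 - (real CARD('n) - 1) * \<epsilon>) * h mm \<le>
        \<gamma>\<^sup>2 * (norm (x i))\<^sup>2 * h (?q i (W t)) - \<epsilon> * (\<Sum>k\<in>UNIV-{i}. h (?q k (W t)))"
      using sk hi by (simp add: algebra_simps)
    then have "(\<gamma>\<^sup>2 * \<rho>\<^sup>2 - (real CARD('n) - 1) * \<epsilon>) * h mm / real CARD('n) \<le>
        (\<gamma>\<^sup>2 * (norm (x i))\<^sup>2 * h (?q i (W t)) - \<epsilon> * (\<Sum>k\<in>UNIV-{i}. h (?q k (W t)))) / real CARD('n)"
      using n by (intro divide_right_mono) auto
    then have "(\<gamma>\<^sup>2 * \<rho>\<^sup>2 - (real CARD('n) - 1) * \<epsilon>) / real CARD('n) * h mm \<le> Psi i (W t)"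
      unfolding Psi_def by simp
    then show "sld (\<lambda>\<tau>. ?q i (W \<tau>)) t ((\<gamma>\<^sup>2 * \<rho>\<^sup>2 - (real CARD('n) - 1) * \<epsilon>) / real CARD('n) * h (Min (range (\<lambda>i. ?q i (W t)))))"
      using per_i[of i] unfolding mm_def by (auto intro: sld_mono)
  qed (auto intro: contq)
qed

theorem mainTheorem3:
  fixes \<gamma> :: real
    and a :: "'m::finite \<Rightarrow> real"
    and x :: "'n::finite \<Rightarrow> real^'d"
    and y :: "'n \<Rightarrow> real"
    and lossf :: "real \<Rightarrow> real"
    and W :: "real \<Rightarrow> real^'d^'m"
  assumes gamma: "0 < \<gamma>" "\<gamma> < 1"
    and a_vals: "\<forall>j. a j = 1 / sqrt (real CARD('m)) \<or> a j = - 1 / sqrt (real CARD('m))"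
    and a_pos: "\<exists>j. a j = 1 / sqrt (real CARD('m))"
    and a_neg: "\<exists>j. a j = - 1 / sqrt (real CARD('m))"
    and y_vals: "\<forall>i. y i = 1 \<or> y i = - 1"
    and x_nz: "\<forall>i. x i \<noteq> 0"
    and sep: "(Min (range (\<lambda>i. norm (x i))))\<^sup>2 \<ge>
               3 * \<gamma> powr (-3)
               * (Max (range (\<lambda>i. norm (x i))) / Min (range (\<lambda>i. norm (x i))))\<^sup>2
               * real CARD('n)
               * Max ({0} \<union> {\<bar>x i \<bullet> x j\<bar> | i j. i \<noteq> j})"
    and loss: "lossf = (\<lambda>q. exp (- q)) \<or> lossf = (\<lambda>q. ln (1 + exp (- q)))"
    and flow: "gradient_flow (emp_loss lossf \<gamma> a x y) W"
  shows "\<exists>t0. \<forall>t\<ge>t0. emp_loss lossf \<gamma> a x y (W t) < ln 2 / real CARD('n)"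
proof -
  obtain h where der: "\<And>q. (lossf has_real_derivative - h q) (at q)" and hpos: "\<And>q. h q > 0"
    and anti: "\<And>p q. p \<le> q \<Longrightarrow> h q \<le> h p" and hc: "\<And>q. isCont h q" and lexp: "\<And>q. lossf q \<le> exp (- q)"
    using loss_props[OF loss] by blast
  let ?q = "\<lambda>k W. qf \<gamma> a x y k W"
  define nn where "nn = real CARD('n)"
  have nn: "nn > 0" "nn \<ge> 1" unfolding nn_def by auto
  define \<rho> where "\<rho> = Min (range (\<lambda>i. norm (x i)))"
  define Rm where "Rm = Max (range (\<lambda>i. norm (x i)))"
  define E where "E = {\<bar>x i \<bullet> x j\<bar> | i j. i \<noteq> j}"
  define \<epsilon> where "\<epsilon> = Max ({0} \<union> E)"
  have finE: "finite E"
  proof -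
    have "E \<subseteq> (\<lambda>(i,j). \<bar>x i \<bullet> x j\<bar>) ` UNIV" unfolding E_def by auto
    then show ?thesis by (rule finite_subset) simp
  qed
  have eps0: "\<epsilon> \<ge> 0" unfolding \<epsilon>_def using finE by simp
  have eps: "\<bar>x i \<bullet> x k\<bar> \<le> \<epsilon>" if "i \<noteq> k" for i k
  proof -
    have "\<bar>x i \<bullet> x k\<bar> \<in> {0} \<union> E" unfolding E_def using that by blast
    then show ?thesis unfolding \<epsilon>_def using finE by simp
  qed
  have rho: "\<rho> \<le> norm (x i)" for i unfolding \<rho>_def by simp
  have Rm: "norm (x i) \<le> Rm" for i unfolding Rm_def by simp
  have rho_pos: "\<rho> > 0"
  proof -
    have "\<rho> \<in> range (\<lambda>i. norm (x i))" unfolding \<rho>_def by (rule Min_in) auto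
    then show ?thesis using x_nz by auto
  qed
  have rhoRm: "\<rho> \<le> Rm" using rho[of undefined] Rm[of undefined] by simp
  have asq: "(\<Sum>j\<in>UNIV. (a j)\<^sup>2) = 1"
  proof -
    have sq: "(sqrt (real CARD('m)))\<^sup>2 = real CARD('m)" by simp
    have "(a j)\<^sup>2 = 1 / real CARD('m)" for j
    proof -
      have "(a j)\<^sup>2 = 1 / (sqrt (real CARD('m)))\<^sup>2"
        using a_vals[rule_format, of j] by (auto simp: power_divide)
      then show ?thesis unfolding sq .
    qed
    then show ?thesis by simp
  qed
  define \<kappa> where "\<kappa> = (\<gamma>\<^sup>2 * \<rho>\<^sup>2 - (nn - 1) * \<epsilon>) / nn"
  have kappa: "\<kappa> > 0"
  proof -
    have pw: "\<gamma> powr (-3) = 1 / \<gamma> ^ 3"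
    proof -
      have "\<gamma> powr (-3) = inverse (\<gamma> powr 3)" by (rule powr_minus)
      also have "\<gamma> powr 3 = \<gamma> ^ 3" using gamma by simp
      finally show ?thesis by (simp add: divide_inverse)
    qed
    have sep': "\<rho>\<^sup>2 \<ge> 3 * (1 / \<gamma> ^ 3) * (Rm / \<rho>)\<^sup>2 * nn * \<epsilon>"
      using sep unfolding pw \<rho>_def[symmetric] Rm_def[symmetric] E_def[symmetric] \<epsilon>_def[symmetric] nn_def[symmetric] .
    have R1: "(Rm / \<rho>)\<^sup>2 \<ge> 1" using rhoRm rho_pos by (simp add: le_divide_eq)
    have "\<gamma>\<^sup>2 * \<rho>\<^sup>2 \<ge> \<gamma>\<^sup>2 * (3 * (1 / \<gamma> ^ 3) * (Rm / \<rho>)\<^sup>2 * nn * \<epsilon>)"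
      using sep' by (intro mult_left_mono) auto
    also have "\<gamma>\<^sup>2 * (3 * (1 / \<gamma> ^ 3) * (Rm / \<rho>)\<^sup>2 * nn * \<epsilon>) = (1 / \<gamma>) * ((Rm / \<rho>)\<^sup>2 * (3 * nn * \<epsilon>))"
      using gamma by (simp add: power2_eq_square power3_eq_cube field_simps)
    also have "\<dots> \<ge> 1 * (1 * (3 * nn * \<epsilon>))"
    proof -
      have g1: "1 \<le> 1 / \<gamma>" using gamma by (simp add: field_simps)
      have ne: "3 * nn * \<epsilon> \<ge> 0" using eps0 nn by simp
      have l2: "1 * (3 * nn * \<epsilon>) \<le> (Rm / \<rho>)\<^sup>2 * (3 * nn * \<epsilon>)" by (rule mult_right_mono[OF R1 ne])
      have "1 * (1 * (3 * nn * \<epsilon>)) \<le> (1 / \<gamma>) * ((Rm / \<rho>)\<^sup>2 * (3 * nn * \<epsilon>))"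
        by (rule mult_mono[OF g1 l2]) (use ne gamma in auto)
      then show ?thesis .
    qed
    finally have A: "\<gamma>\<^sup>2 * \<rho>\<^sup>2 \<ge> 3 * nn * \<epsilon>" by simp
    have B: "\<gamma>\<^sup>2 * \<rho>\<^sup>2 > 0" using gamma rho_pos by simp
    have "(nn - 1) * \<epsilon> \<le> nn * \<epsilon>" using eps0 by (simp add: algebra_simps)
    then have "\<gamma>\<^sup>2 * \<rho>\<^sup>2 - (nn - 1) * \<epsilon> > 0" using A B eps0 nn by linarith
    then show ?thesis unfolding \<kappa>_def using nn by simp
  qed
  define Fm where "Fm V = Min (range (\<lambda>i. ?q i V))" for V
  define K where "K = (\<Sum>j\<in>UNIV. \<bar>a j\<bar>) * Rm"
  have K0: "K \<ge> 0" unfolding K_def using rho_pos rhoRm by (intro mult_nonneg_nonneg sum_nonneg) auto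
  have qlip: "\<bar>?q i V1 - ?q i V2\<bar> \<le> K * norm (V1 - V2)" for i V1 V2
  proof -
    have "?q i V1 - ?q i V2 = y i * (\<Sum>j\<in>UNIV. a j * (leaky \<gamma> (V1 $ j \<bullet> x i) - leaky \<gamma> (V2 $ j \<bullet> x i)))"
      by (simp add: qf_def net_def right_diff_distrib sum_subtractf)
    then have "\<bar>?q i V1 - ?q i V2\<bar> = \<bar>\<Sum>j\<in>UNIV. a j * (leaky \<gamma> (V1 $ j \<bullet> x i) - leaky \<gamma> (V2 $ j \<bullet> x i))\<bar>"
      using y_vals[rule_format, of i] by (auto simp: abs_mult)
    also have "\<dots> \<le> (\<Sum>j\<in>UNIV. \<bar>a j\<bar> * (norm (V1 - V2) * Rm))"
    proof (rule order.trans[OF sum_abs], rule sum_mono)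
      fix j
      have "\<bar>leaky \<gamma> (V1 $ j \<bullet> x i) - leaky \<gamma> (V2 $ j \<bullet> x i)\<bar> \<le> \<bar>V1 $ j \<bullet> x i - V2 $ j \<bullet> x i\<bar>"
        using gamma by (intro leaky_lip) auto
      also have "\<dots> = \<bar>(V1 - V2) $ j \<bullet> x i\<bar>" by (simp add: inner_diff_left)
      also have "\<dots> \<le> norm ((V1 - V2) $ j) * norm (x i)" by (rule Cauchy_Schwarz_ineq2)
      also have "\<dots> \<le> norm (V1 - V2) * Rm" by (intro mult_mono Finite_Cartesian_Product.norm_nth_le Rm) auto
      finally show "\<bar>a j * (leaky \<gamma> (V1 $ j \<bullet> x i) - leaky \<gamma> (V2 $ j \<bullet> x i))\<bar> \<le> \<bar>a j\<bar> * (norm (V1 - V2) * Rm)"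
        by (simp add: abs_mult mult_left_mono)
    qed
    also have "\<dots> = K * norm (V1 - V2)" by (simp add: K_def sum_distrib_right sum_distrib_left mult_ac)
    finally show ?thesis .
  qed
  have Flip: "\<bar>Fm V1 - Fm V2\<bar> \<le> K * norm (V1 - V2)" for V1 V2
    unfolding Fm_def by (rule Min_lip) (auto intro: qlip)
  have flowAC: "\<And>T. T \<ge> 0 \<Longrightarrow> abs_cont_on 0 T W"
    and flowAE: "AE t in lborel. t \<ge> 0 \<longrightarrow> (\<exists>v. (W has_vector_derivative v) (at t) \<and> - v \<in> clarke_subdiff (emp_loss lossf \<gamma> a x y) (W t))"
    using flow unfolding gradient_flow_def by auto
  have AC: "abs_cont_on s t (\<lambda>\<tau>. Fm (W \<tau>) + c * \<tau>)" if "0 \<le> s" "s \<le> t" for s t c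
    by (rule ac_lip[OF ac_sub[OF flowAC[of t]] K0 Flip]) (use that in auto)
  have key: "AE t in lborel. t \<ge> 0 \<longrightarrow> sld (\<lambda>\<tau>. Fm (W \<tau>)) t (\<kappa> * h (Fm (W t)))"
  proof (rule eventually_mono[OF flowAE], intro impI)
    fix t :: real assume H: "t \<ge> 0 \<longrightarrow> (\<exists>v. (W has_vector_derivative v) (at t) \<and> - v \<in> clarke_subdiff (emp_loss lossf \<gamma> a x y) (W t))"
      and t: "t \<ge> 0"
    then obtain V where V: "(W has_vector_derivative V) (at t)" "- V \<in> clarke_subdiff (emp_loss lossf \<gamma> a x y) (W t)"
      by auto
    have ks: "sld (\<lambda>\<tau>. Fm (W \<tau>)) t ((\<gamma>\<^sup>2 * \<rho>\<^sup>2 - (real CARD('n) - 1) * \<epsilon>) / real CARD('n) * h (Fm (W t)))"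
      unfolding Fm_def
      by (rule key_sld[OF der anti hpos hc gamma(1) _ asq _ eps eps0 rho _ V]) (use gamma y_vals rho_pos in auto)
    then show "sld (\<lambda>\<tau>. Fm (W \<tau>)) t (\<kappa> * h (Fm (W t)))"
      unfolding \<kappa>_def nn_def .
  qed
  have mono: "Fm (W s) \<le> Fm (W t)" if "0 \<le> s" "s \<le> t" for s t
  proof -
    have "Fm (W s) + 0 * s \<le> Fm (W t) + 0 * t"
    proof (rule ac_mono[OF AC[OF that] that(2)])
      show "AE \<tau> in lborel. s \<le> \<tau> \<and> \<tau> \<le> t \<longrightarrow> sld (\<lambda>\<tau>. Fm (W \<tau>) + 0 * \<tau>) \<tau> 0"
      proof (rule eventually_mono[OF key], intro impI)
        fix \<tau> :: real assume "0 \<le> \<tau> \<longrightarrow> sld (\<lambda>\<tau>. Fm (W \<tau>)) \<tau> (\<kappa> * h (Fm (W \<tau>)))" "s \<le> \<tau> \<and> \<tau> \<le> t"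
        then have "sld (\<lambda>\<tau>. Fm (W \<tau>)) \<tau> (\<kappa> * h (Fm (W \<tau>)))" using that by auto
        then have "sld (\<lambda>\<tau>. Fm (W \<tau>) + 0 * \<tau>) \<tau> (\<kappa> * h (Fm (W \<tau>)) + 0)" by (rule sld_add_lin)
        then show "sld (\<lambda>\<tau>. Fm (W \<tau>) + 0 * \<tau>) \<tau> 0"
          by (rule sld_mono) (simp add: less_imp_le[OF mult_pos_pos[OF kappa hpos]])
      qed
    qed
    then show ?thesis by simp
  qed
  define M where "M = ln nn - ln (ln 2)"
  define c0 where "c0 = \<kappa> * h M"
  have c0: "c0 > 0" unfolding c0_def using kappa hpos by simp
  define T where "T = max 0 ((M - Fm (W 0)) / c0) + 1"
  have T: "T \<ge> 0" "c0 * T > M - Fm (W 0)"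
  proof -
    show "T \<ge> 0" unfolding T_def by simp
    have "c0 * T \<ge> c0 * ((M - Fm (W 0)) / c0 + 1)" unfolding T_def using c0 by (intro mult_left_mono) auto
    moreover have "c0 * ((M - Fm (W 0)) / c0 + 1) = M - Fm (W 0) + c0" using c0 by (simp add: field_simps)
    ultimately show "c0 * T > M - Fm (W 0)" using c0 by linarith
  qed
  have FT: "Fm (W T) > M"
  proof (rule ccontr)
    assume "\<not> Fm (W T) > M"
    then have le: "Fm (W T) \<le> M" by simp
    have "Fm (W 0) + (- c0) * 0 \<le> Fm (W T) + (- c0) * T"
    proof (rule ac_mono[OF AC[OF order_refl T(1)] T(1)])
      show "AE \<tau> in lborel. 0 \<le> \<tau> \<and> \<tau> \<le> T \<longrightarrow> sld (\<lambda>\<tau>. Fm (W \<tau>) + (- c0) * \<tau>) \<tau> 0"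
      proof (rule eventually_mono[OF key], intro impI)
        fix \<tau> :: real assume "0 \<le> \<tau> \<longrightarrow> sld (\<lambda>\<tau>. Fm (W \<tau>)) \<tau> (\<kappa> * h (Fm (W \<tau>)))" and tt: "0 \<le> \<tau> \<and> \<tau> \<le> T"
        then have s: "sld (\<lambda>\<tau>. Fm (W \<tau>)) \<tau> (\<kappa> * h (Fm (W \<tau>)))" by auto
        have "Fm (W \<tau>) \<le> M" using mono[of \<tau> T] tt le by auto
        then have "h M \<le> h (Fm (W \<tau>))" by (rule anti)
        then have "c0 \<le> \<kappa> * h (Fm (W \<tau>))" unfolding c0_def using kappa by (intro mult_left_mono) auto
        moreover have "sld (\<lambda>\<tau>. Fm (W \<tau>) + (- c0) * \<tau>) \<tau> (\<kappa> * h (Fm (W \<tau>)) + (- c0))"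
          by (rule sld_add_lin[OF s])
        ultimately show "sld (\<lambda>\<tau>. Fm (W \<tau>) + (- c0) * \<tau>) \<tau> 0"
          by (elim sld_mono) simp
      qed
    qed
    then show False using T(2) le by (simp add: algebra_simps)
  qed
  show ?thesis
  proof (intro exI[of _ T] allI impI)
    fix t assume tT: "t \<ge> T"
    have Ft: "Fm (W t) > M" using mono[of T t] T(1) tT FT by auto
    have qi: "?q i (W t) > M" for i
    proof -
      have "Fm (W t) \<le> ?q i (W t)" unfolding Fm_def by simp
      then show ?thesis using Ft by simp
    qed
    have "emp_loss lossf \<gamma> a x y (W t) = (\<Sum>k\<in>UNIV. lossf (?q k (W t))) / nn"
      unfolding nn_def by (rule emp_loss_qf)
    also have "\<dots> < (\<Sum>k\<in>(UNIV::'n set). exp (- M)) / nn"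
    proof (rule divide_strict_right_mono[OF _ nn(1)], rule sum_strict_mono_ex1)
      have lt: "lossf (?q k (W t)) < exp (- M)" for k
      proof -
        have "exp (- ?q k (W t)) < exp (- M)" using qi[of k] by simp
        then show ?thesis using lexp[of "?q k (W t)"] by linarith
      qed
      show "\<forall>k\<in>UNIV. lossf (?q k (W t)) \<le> exp (- M)" using lt less_imp_le by blast
      show "\<exists>k\<in>UNIV. lossf (?q k (W t)) < exp (- M)" using lt by blast
    qed simp
    also have "\<dots> = exp (- M)" using nn unfolding nn_def by simp
    also have "\<dots> = ln 2 / nn" unfolding M_def using nn by (simp add: exp_diff)
    finally show "emp_loss lossf \<gamma> a x y (W t) < ln 2 / real CARD('n)" unfolding nn_def .
  qed
qed

end
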